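(* Let $d=1$ and let $0<\delta<2/3$. The perturbed senile reinforced random walk (Model I) with parameter $\delta$ is diffusive: the limit $\nu(\delta)=\lim_{n\to\infty}\mathbb{E}[|S_n|^2]/n$ exists and is strictly positive, and it is given by \[ \nu(\delta)=\frac{\mathbb{P}(\tau \text{ odd})}{\mathbb{P}(\tau \text{ even})\,\mathbb{E}[\tau]} . \] Moreover $\nu(\delta)\to 0$ as $\delta\to0^+$, and $\nu(\delta)$ is of order $1/|\log\delta|$: there are constants $0<c\le C<\infty$ such that $c/|\log\delta|\le \nu(\delta)\le C/|\log\delta|$ for all sufficiently small $\delta>0$.
   Context: Model I on $\mathbb{Z}^d$ with parameter $\delta>0$: a sequence $(S_n)_{n\ge0}$ of $\mathbb{Z}^d$-valued random variables with filtration $\mathcal{F}_n=\sigma(S_0,\dots,S_n)$, such that $S_0=0$ a.s. and $S_1$ is uniformly distributed on the $2d$ nearest neighbours of the origin. For $n\ge1$ let $e_n=\{S_{n-1},S_n\}$ (an undirected edge) and $m_n=\max\{k\ge1: e_{n-l+1}=e_n \text{ for all } 1\le l\le k\}$ (the number of consecutive times the current edge has just been traversed). For $n\ge1$, conditionally on $\mathcal{F}_n$, the walk traverses $e_n$ again (i.e. $S_{n+1}=S_{n-1}$) with probability $\max\{\frac{1+m_n}{2d+m_n}-\delta,0\}$, and otherwise moves to one of the other $2d-1$ nearest neighbours of $S_n$, each equally likely. (In $d=1$: it recrosses $e_n$ with probability $\frac{1+m_n}{2+m_n}-\delta$ and crosses the other edge with probability $\frac{1}{2+m_n}+\delta$.)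 The random variable $\tau=\sup\{n\ge1: S_m\in\{0,S_1\}\ \text{for all } m\le n\}$ is the number of consecutive traversals of the first edge before leaving it. The walk is called diffusive if $\nu=\lim_{n\to\infty}\mathbb{E}[|S_n|^2]/n$ exists in $(0,\infty)$; $\nu$ is the diffusion constant. *)

theory Defs
  imports "HOL-Analysis.Analysis"
begin

text \<open>Model I in dimension d = 1. A finite trajectory (S_0,...,S_n) is represented
  by an int list xs of length n+1 with xs!i = S_i.\<close>

definition edge1 :: "int list \<Rightarrow> nat \<Rightarrow> int set" where
  "edge1 xs k = {xs ! (k - 1), xs ! k}"

text \<open>m_n: number of consecutive most recent traversals of the current edge e_n.\<close>
definition mcount :: "int list \<Rightarrow> nat \<Rightarrow> nat" where
  "mcount xs n = (GREATEST k. 1 \<le> k \<and> k \<le> n \<and>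
       (\<forall>l\<in>{1..k}. edge1 xs (n - l + 1) = edge1 xs n))"

definition recross_prob :: "real \<Rightarrow> nat \<Rightarrow> real" where
  "recross_prob \<delta> m = max ((1 + real m) / (2 + real m) - \<delta>) 0"

definition trans_prob :: "real \<Rightarrow> int list \<Rightarrow> nat \<Rightarrow> int \<Rightarrow> real" where
  "trans_prob \<delta> xs n x =
     (if \<bar>x - xs ! n\<bar> \<noteq> 1 then 0
      else if n = 0 then 1 / 2
      else if x = xs ! (n - 1) then recross_prob \<delta> (mcount xs n)
      else 1 - recross_prob \<delta> (mcount xs n))"

definition path_prob :: "real \<Rightarrow> int list \<Rightarrow> nat \<Rightarrow> real" where
  "path_prob \<delta> xs n =
     (if xs ! 0 = 0 then 1 else 0) * (\<Prod>k<n. trans_prob \<delta> xs k (xs ! (k + 1)))"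

text \<open>All candidate trajectories of n steps (the walk moves by +-1, so |S_i| <= n).\<close>
definition paths :: "nat \<Rightarrow> int list set" where
  "paths n = {xs. length xs = Suc n \<and> set xs \<subseteq> {- int n .. int n}}"

definition msd :: "real \<Rightarrow> nat \<Rightarrow> real" where
  "msd \<delta> n = (\<Sum>xs\<in>paths n. path_prob \<delta> xs n * (real_of_int (xs ! n))\<^sup>2)"

definition tau_prob :: "real \<Rightarrow> nat \<Rightarrow> real" where
  "tau_prob \<delta> k = (\<Sum>xs\<in>paths (Suc k).
      (if (\<forall>m\<le>k. xs ! m \<in> {0, xs ! 1}) \<and> xs ! (Suc k) \<notin> {0, xs ! 1}
       then path_prob \<delta> xs (Suc k) else 0))"

definition tau_odd :: "real \<Rightarrow> real" where
  "tau_odd \<delta> = (\<Sum>k. if odd k then tau_prob \<delta> k else 0)"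

definition tau_even :: "real \<Rightarrow> real" where
  "tau_even \<delta> = (\<Sum>k. if even k then tau_prob \<delta> k else 0)"

definition tau_mean :: "real \<Rightarrow> real" where
  "tau_mean \<delta> = (\<Sum>k. real k * tau_prob \<delta> k)"

definition diffusion_const :: "real \<Rightarrow> real" where
  "diffusion_const \<delta> = lim (\<lambda>n. msd \<delta> n / real n)"

end

theory Submission
  imports Defs "HOL-Real_Asymp.Real_Asymp"
begin

definition good :: "int \<Rightarrow> nat \<Rightarrow> bool" where
  "good e m \<longleftrightarrow> (e = 1 \<or> e = -1) \<and> 1 \<le> m"

definition Top :: "real \<Rightarrow> (int \<Rightarrow> int \<Rightarrow> nat \<Rightarrow> real) \<Rightarrow> (int \<Rightarrow> int \<Rightarrow> nat \<Rightarrow> real)" where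
  "Top d F = (\<lambda>s e m. recross_prob d m * F (s - e) (- e) (Suc m)
                      + (1 - recross_prob d m) * F (s + e) e 1)"

definition E1 :: "(int \<Rightarrow> int \<Rightarrow> nat \<Rightarrow> real) \<Rightarrow> real" where
  "E1 F = (F 1 1 1 + F (-1) (-1) 1) / 2"

definition EE :: "real \<Rightarrow> nat \<Rightarrow> (int \<Rightarrow> int \<Rightarrow> nat \<Rightarrow> real) \<Rightarrow> real" where
  "EE d n F = E1 ((Top d ^^ n) F)"

lemma rp_nonneg: "0 \<le> recross_prob d m"
  by (simp add: recross_prob_def)

lemma rp_le1: "0 \<le> d \<Longrightarrow> recross_prob d m \<le> 1"
proof -
  assume d: "0 \<le> d"
  have "(1 + real m) / (2 + real m) \<le> 1" by simp
  then show ?thesis using d unfolding recross_prob_def max.bounded_iff by linarith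
qed

lemma rp_le: "0 < d \<Longrightarrow> d \<le> 1 \<Longrightarrow> recross_prob d m \<le> 1 - d"
proof -
  assume d: "0 < d" "d \<le> 1"
  have "(1 + real m) / (2 + real m) \<le> 1" by simp
  then show ?thesis using d by (simp add: recross_prob_def)
qed

lemma Top_lin: "Top d (\<lambda>s e m. a * F s e m + b * G s e m) = (\<lambda>s e m. a * Top d F s e m + b * Top d G s e m)"
  by (rule ext)+ (simp add: Top_def algebra_simps)

lemma Topn_lin: "(Top d ^^ n) (\<lambda>s e m. a * F s e m + b * G s e m) = (\<lambda>s e m. a * (Top d ^^ n) F s e m + b * (Top d ^^ n) G s e m)"
proof (induction n arbitrary: F G)
  case 0
  then show ?case by simp
next
  case (Suc n)
  show ?case by (simp only: funpow_Suc_right comp_def Top_lin Suc.IH)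
qed

lemma Topn_const: "(Top d ^^ n) (\<lambda>s e m. c) = (\<lambda>s e m. c)"
proof (induction n)
  case (Suc n)
  have "Top d (\<lambda>s e m. c) = (\<lambda>s e m. c)" by (rule ext)+ (simp add: Top_def algebra_simps)
  then show ?case by (simp only: funpow_Suc_right comp_def Suc.IH)
qed simp

lemma Ex_lin: "EE d n (\<lambda>s e m. a * F s e m + b * G s e m) = a * EE d n F + b * EE d n G"
  by (simp add: EE_def Topn_lin E1_def field_simps)

lemma Ex_const: "EE d n (\<lambda>s e m. c) = c"
  by (simp add: EE_def Topn_const E1_def)

lemma Ex_step: "EE d (Suc n) F = EE d n (Top d F)"
  unfolding EE_def funpow_Suc_right comp_def ..

lemma Topn_mono:
  assumes d: "0 < d"
  shows "(\<forall>s e m. good e m \<longrightarrow> F s e m \<le> G s e m) \<Longrightarrow>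
    (\<forall>s e m. good e m \<longrightarrow> (Top d ^^ n) F s e m \<le> (Top d ^^ n) G s e m)"
proof (induction n arbitrary: F G)
  case 0
  then show ?case by simp
next
  case (Suc n)
  have "\<forall>s e m. good e m \<longrightarrow> Top d F s e m \<le> Top d G s e m"
  proof (intro allI impI)
    fix s e m assume g: "good e m"
    then have g1: "good (-e) (Suc m)" "good e 1" by (auto simp: good_def)
    have r0: "0 \<le> recross_prob d m" "0 \<le> 1 - recross_prob d m"
      using rp_nonneg[of d m] rp_le1[of d m] d by auto
    show "Top d F s e m \<le> Top d G s e m"
      unfolding Top_def using Suc.prems g1 r0
      by (intro add_mono mult_left_mono) auto
  qed
  from Suc.IH[OF this] show ?case unfolding funpow_Suc_right comp_def .
qed

lemma Ex_mono:
  assumes "0 < d" "\<And>s e m. good e m \<Longrightarrow> F s e m \<le> G s e m"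
  shows "EE d n F \<le> EE d n G"
proof -
  have "\<forall>s e m. good e m \<longrightarrow> (Top d ^^ n) F s e m \<le> (Top d ^^ n) G s e m"
    using Topn_mono[OF assms(1)] assms(2) by blast
  then show ?thesis unfolding EE_def E1_def by (auto simp: good_def intro!: divide_right_mono add_mono)
qed

lemma Ex_cong:
  assumes "0 < d" "\<And>s e m. good e m \<Longrightarrow> F s e m = G s e m"
  shows "EE d n F = EE d n G"
  using Ex_mono[OF assms(1), of F G n] Ex_mono[OF assms(1), of G F n] assms(2) by force


definition mP :: "int list \<Rightarrow> nat \<Rightarrow> nat \<Rightarrow> bool" where
  "mP xs n k \<longleftrightarrow> 1 \<le> k \<and> k \<le> n \<and> (\<forall>l\<in>{1..k}. edge1 xs (n - l + 1) = edge1 xs n)"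

lemma mcount_mP: "mcount xs n = Greatest (mP xs n)"
  unfolding mcount_def mP_def ..

lemma mP_1: "1 \<le> n \<Longrightarrow> mP xs n 1"
  by (simp add: mP_def)

lemma mcount_props:
  assumes "1 \<le> n"
  shows "mP xs n (mcount xs n)" "\<And>k. mP xs n k \<Longrightarrow> k \<le> mcount xs n"
  unfolding mcount_mP
   apply (rule GreatestI_nat[of "mP xs n" 1 n], rule mP_1[OF assms], simp add: mP_def)
  apply (rule Greatest_le_nat[of "mP xs n" _ n], assumption, simp add: mP_def)
  done

lemma mcount_eqI:
  assumes "mP xs n k" "\<And>j. mP xs n j \<Longrightarrow> j \<le> k"
  shows "mcount xs n = k"
  unfolding mcount_mP using assms by (intro Greatest_equality) auto

lemma mcount_1: "mcount xs 1 = 1"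
  by (rule mcount_eqI) (auto simp: mP_def)

lemma mcount_ge1: "1 \<le> n \<Longrightarrow> 1 \<le> mcount xs n"
  using mcount_props(1)[of n xs] by (simp add: mP_def)

lemma mcount_cong:
  assumes "\<And>i. i \<le> n \<Longrightarrow> xs ! i = ys ! i"
  shows "mcount xs n = mcount ys n"
proof -
  have E: "\<And>i. i \<le> n \<Longrightarrow> edge1 xs i = edge1 ys i"
    using assms by (simp add: edge1_def)
  have "mP xs n = mP ys n"
  proof
    fix k
    show "mP xs n k = mP ys n k"
    proof (cases "1 \<le> k \<and> k \<le> n")
      case True
      then have "\<forall>l\<in>{1..k}. edge1 xs (n-l+1) = edge1 ys (n-l+1)" using E by auto
      moreover have "edge1 xs n = edge1 ys n" using E by auto
      ultimately show ?thesis using True unfolding mP_def by auto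
    next
      case False then show ?thesis unfolding mP_def by auto
    qed
  qed
  then show ?thesis by (simp add: mcount_mP)
qed

lemma mcount_Suc:
  assumes N: "1 \<le> N"
    and st: "\<bar>xs ! Suc N - xs ! N\<bar> = 1" "\<bar>xs ! N - xs ! (N - 1)\<bar> = 1"
  shows "mcount xs (Suc N) = (if xs ! Suc N = xs ! (N - 1) then Suc (mcount xs N) else 1)"
proof (cases "xs ! Suc N = xs ! (N - 1)")
  case True
  have eN: "edge1 xs (Suc N) = edge1 xs N"
    using True by (auto simp: edge1_def)
  have key: "mP xs (Suc N) (Suc k) \<longleftrightarrow> mP xs N k" if "1 \<le> k" for k
  proof -
    have "(\<forall>l\<in>{1..Suc k}. edge1 xs (Suc N - l + 1) = edge1 xs (Suc N)) \<longleftrightarrow>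
          (\<forall>l\<in>{1..k}. edge1 xs (N - l + 1) = edge1 xs N)"
    proof
      assume H: "\<forall>l\<in>{1..Suc k}. edge1 xs (Suc N - l + 1) = edge1 xs (Suc N)"
      show "\<forall>l\<in>{1..k}. edge1 xs (N - l + 1) = edge1 xs N"
      proof
        fix l assume l: "l \<in> {1..k}"
        then have "Suc l \<in> {1..Suc k}" by auto
        with H have "edge1 xs (Suc N - Suc l + 1) = edge1 xs (Suc N)" by blast
        then show "edge1 xs (N - l + 1) = edge1 xs N" using eN by simp
      qed
    next
      assume H: "\<forall>l\<in>{1..k}. edge1 xs (N - l + 1) = edge1 xs N"
      show "\<forall>l\<in>{1..Suc k}. edge1 xs (Suc N - l + 1) = edge1 xs (Suc N)"
      proof
        fix l assume l: "l \<in> {1..Suc k}"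
        show "edge1 xs (Suc N - l + 1) = edge1 xs (Suc N)"
        proof (cases "l = 1")
          case True then show ?thesis by simp
        next
          case False
          then obtain l' where l': "l = Suc l'" "l' \<in> {1..k}" using l
            by (cases l) auto
          with H have "edge1 xs (N - l' + 1) = edge1 xs N" by blast
          then show ?thesis using l' eN by simp
        qed
      qed
    qed
    then show ?thesis using that by (simp add: mP_def)
  qed
  have "mcount xs (Suc N) = Suc (mcount xs N)"
  proof (rule mcount_eqI)
    show "mP xs (Suc N) (Suc (mcount xs N))"
      using key[OF mcount_ge1[OF N]] mcount_props(1)[OF N] by blast
    fix j assume j: "mP xs (Suc N) j"
    show "j \<le> Suc (mcount xs N)"
    proof (cases "j \<le> 1")
      case True then show ?thesis by simp
    next
      case False
      then obtain k where k: "j = Suc k" "1 \<le> k" by (cases j) auto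
      with j key have "mP xs N k" by blast
      then show ?thesis using mcount_props(2)[OF N] k by force
    qed
  qed
  then show ?thesis using True by simp
next
  case False
  have ne: "edge1 xs (Suc N) \<noteq> edge1 xs N"
  proof
    assume "edge1 xs (Suc N) = edge1 xs N"
    then have "{xs ! N, xs ! Suc N} = {xs ! (N - 1), xs ! N}"
      using N by (simp add: edge1_def)
    then have "xs ! (N - 1) \<in> {xs ! N, xs ! Suc N}" by blast
    then show False using False st by auto
  qed
  have "mcount xs (Suc N) = 1"
  proof (rule mcount_eqI)
    show "mP xs (Suc N) 1" by (rule mP_1) simp
    fix j assume j: "mP xs (Suc N) j"
    show "j \<le> 1"
    proof (rule ccontr)
      assume "\<not> j \<le> 1"
      then have "(2::nat) \<in> {1..j}" by auto
      with j have "edge1 xs (Suc N - 2 + 1) = edge1 xs (Suc N)" unfolding mP_def by blast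
      moreover have "Suc N - 2 + 1 = N" using N by simp
      ultimately show False using ne by simp
    qed
  qed
  then show ?thesis using False by simp
qed

definition valid :: "int list \<Rightarrow> nat \<Rightarrow> bool" where
  "valid xs n \<longleftrightarrow> xs ! 0 = 0 \<and> (\<forall>k<n. \<bar>xs ! Suc k - xs ! k\<bar> = 1)"

lemma tp_cong:
  assumes "\<And>i. i \<le> k \<Longrightarrow> xs ! i = ys ! i"
  shows "trans_prob d xs k x = trans_prob d ys k x"
proof -
  have "mcount xs k = mcount ys k" by (rule mcount_cong) (use assms in auto)
  then show ?thesis using assms[of k] assms[of "k - 1"] by (simp add: trans_prob_def)
qed

lemma pp_cong:
  assumes "\<And>i. i \<le> n \<Longrightarrow> xs ! i = ys ! i"
  shows "path_prob d xs n = path_prob d ys n"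
proof -
  have "(\<Prod>k<n. trans_prob d xs k (xs ! (k + 1))) = (\<Prod>k<n. trans_prob d ys k (ys ! (k + 1)))"
  proof (rule prod.cong[OF refl])
    fix k assume "k \<in> {..<n}"
    then have k: "k < n" by simp
    have eq: "xs ! (k + 1) = ys ! (k + 1)" using assms k by auto
    have "trans_prob d xs k (ys ! (k + 1)) = trans_prob d ys k (ys ! (k + 1))"
      by (rule tp_cong) (use assms k in auto)
    then show "trans_prob d xs k (xs ! (k + 1)) = trans_prob d ys k (ys ! (k + 1))" using eq by simp
  qed
  then show ?thesis using assms[of 0] by (simp add: path_prob_def)
qed

lemma pp_valid:
  assumes "path_prob d xs n \<noteq> 0"
  shows "valid xs n"
proof -
  have h0: "xs ! 0 = 0" and hp: "(\<Prod>k<n. trans_prob d xs k (xs ! (k + 1))) \<noteq> 0"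
    using assms by (auto simp: path_prob_def split: if_splits)
  have "\<forall>k<n. \<bar>xs ! Suc k - xs ! k\<bar> = 1"
  proof (intro allI impI)
    fix k assume "k < n"
    then have "trans_prob d xs k (xs ! (k + 1)) \<noteq> 0" using hp by auto
    then show "\<bar>xs ! Suc k - xs ! k\<bar> = 1" by (auto simp: trans_prob_def split: if_splits)
  qed
  then show ?thesis using h0 by (simp add: valid_def)
qed

lemma valid_bound:
  assumes "valid xs n" "i \<le> n"
  shows "\<bar>xs ! i\<bar> \<le> int i"
  using assms(2)
proof (induction i)
  case 0
  then show ?case using assms(1) by (simp add: valid_def)
next
  case (Suc i)
  then have "\<bar>xs ! Suc i - xs ! i\<bar> = 1" using assms(1) by (simp add: valid_def)
  with Suc show ?case by auto
qed

lemma pp_snoc: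
  assumes "length xs = Suc n"
  shows "path_prob d (xs @ [x]) (Suc n) = path_prob d xs n * trans_prob d xs n x"
proof -
  have e1: "(xs @ [x]) ! i = xs ! i" if "i \<le> n" for i
    using that assms by (simp add: nth_append)
  have e2: "(xs @ [x]) ! Suc n = x" using assms by (simp add: nth_append)
  have "path_prob d (xs @ [x]) n = path_prob d xs n" by (rule pp_cong) (use e1 in auto)
  moreover have "trans_prob d (xs @ [x]) n x = trans_prob d xs n x" by (rule tp_cong) (use e1 in auto)
  ultimately show ?thesis using e2
    by (simp add: path_prob_def mult.assoc)
qed

lemma finite_paths: "finite (paths n)"
proof -
  have "paths n = {xs. set xs \<subseteq> {- int n .. int n} \<and> length xs = Suc n}"
    by (auto simp: paths_def)
  then show ?thesis using finite_lists_length_eq[of "{- int n .. int n}" "Suc n"] by simp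
qed

lemma step_sum:
  "(\<Sum>ys\<in>paths (Suc n). path_prob d ys (Suc n) * G ys) =
   (\<Sum>xs\<in>paths n. path_prob d xs n * (trans_prob d xs n (xs ! n - 1) * G (xs @ [xs ! n - 1])
        + trans_prob d xs n (xs ! n + 1) * G (xs @ [xs ! n + 1])))"
proof -
  define B where "B = {- int (Suc n) .. int (Suc n)}"
  define f where "f = (\<lambda>(xs::int list, x::int). xs @ [x])"
  have inj: "inj_on f (paths n \<times> B)"
    by (auto simp: inj_on_def f_def)
  have sub: "f ` (paths n \<times> B) \<subseteq> paths (Suc n)"
    by (auto simp: f_def paths_def B_def)
  have zero: "path_prob d ys (Suc n) * G ys = 0" if ys: "ys \<in> paths (Suc n) - f ` (paths n \<times> B)" for ys
  proof (rule ccontr)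
    assume "path_prob d ys (Suc n) * G ys \<noteq> 0"
    then have "path_prob d ys (Suc n) \<noteq> 0" by auto
    then have v: "valid ys (Suc n)" by (rule pp_valid)
    have len: "length ys = Suc (Suc n)" using ys by (auto simp: paths_def)
    have ysf: "ys = butlast ys @ [last ys]" using len
      by (metis append_butlast_last_id list.size(3) nat.distinct(1))
    have "butlast ys \<in> paths n"
    proof -
      have "length (butlast ys) = Suc n" using len by simp
      moreover have "set (butlast ys) \<subseteq> {- int n .. int n}"
      proof
        fix y assume "y \<in> set (butlast ys)"
        then obtain i where i: "i < Suc n" "y = butlast ys ! i"
          using len by (auto simp: in_set_conv_nth)
        then have "y = ys ! i" using len by (simp add: nth_butlast)
        then have "\<bar>y\<bar> \<le> int i" using valid_bound[OF v, of i] i by simp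
        then show "y \<in> {- int n .. int n}" using i by auto
      qed
      ultimately show ?thesis by (simp add: paths_def)
    qed
    moreover have "last ys \<in> B"
    proof -
      have "last ys \<in> set ys" using len by (intro last_in_set) auto
      then show ?thesis using ys by (auto simp: paths_def B_def)
    qed
    ultimately have "ys \<in> f ` (paths n \<times> B)" using ysf
      by (auto simp: f_def image_iff intro!: bexI[of _ "(butlast ys, last ys)"])
    then show False using ys by blast
  qed
  have "(\<Sum>ys\<in>paths (Suc n). path_prob d ys (Suc n) * G ys) =
        (\<Sum>ys\<in>f ` (paths n \<times> B). path_prob d ys (Suc n) * G ys)"
    by (rule sum.mono_neutral_cong_right) (use finite_paths sub zero in auto)
  also have "\<dots> = (\<Sum>p\<in>paths n \<times> B. path_prob d (f p) (Suc n) * G (f p))"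
    by (rule sum.reindex[OF inj, unfolded comp_def])
  also have "\<dots> = (\<Sum>xs\<in>paths n. \<Sum>x\<in>B. path_prob d (xs @ [x]) (Suc n) * G (xs @ [x]))"
    by (simp add: sum.cartesian_product f_def split_beta)
  also have "\<dots> = (\<Sum>xs\<in>paths n. path_prob d xs n * (trans_prob d xs n (xs ! n - 1) * G (xs @ [xs ! n - 1])
        + trans_prob d xs n (xs ! n + 1) * G (xs @ [xs ! n + 1])))"
  proof (rule sum.cong[OF refl])
    fix xs assume xs: "xs \<in> paths n"
    then have len: "length xs = Suc n" by (simp add: paths_def)
    show "(\<Sum>x\<in>B. path_prob d (xs @ [x]) (Suc n) * G (xs @ [x])) =
      path_prob d xs n * (trans_prob d xs n (xs ! n - 1) * G (xs @ [xs ! n - 1])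
        + trans_prob d xs n (xs ! n + 1) * G (xs @ [xs ! n + 1]))"
    proof (cases "path_prob d xs n = 0")
      case True
      then show ?thesis by (simp add: pp_snoc[OF len])
    next
      case False
      then have v: "valid xs n" by (rule pp_valid)
      have bd: "\<bar>xs ! n\<bar> \<le> int n" using valid_bound[OF v, of n] by simp
      have subB: "{xs ! n - 1, xs ! n + 1} \<subseteq> B" using bd by (auto simp: B_def)
      have "(\<Sum>x\<in>B. path_prob d (xs @ [x]) (Suc n) * G (xs @ [x])) =
            (\<Sum>x\<in>{xs ! n - 1, xs ! n + 1}. path_prob d (xs @ [x]) (Suc n) * G (xs @ [x]))"
      proof (rule sum.mono_neutral_cong_right)
        show "finite B" by (simp add: B_def)
        show "{xs ! n - 1, xs ! n + 1} \<subseteq> B" by (rule subB)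
        show "\<forall>x\<in>B - {xs ! n - 1, xs ! n + 1}. path_prob d (xs @ [x]) (Suc n) * G (xs @ [x]) = 0"
        proof
          fix x assume "x \<in> B - {xs ! n - 1, xs ! n + 1}"
          then have "\<bar>x - xs ! n\<bar> \<noteq> 1" by auto
          then show "path_prob d (xs @ [x]) (Suc n) * G (xs @ [x]) = 0"
            by (simp add: pp_snoc[OF len] trans_prob_def)
        qed
      qed simp
      also have "\<dots> = path_prob d xs n * (trans_prob d xs n (xs ! n - 1) * G (xs @ [xs ! n - 1])
        + trans_prob d xs n (xs ! n + 1) * G (xs @ [xs ! n + 1]))"
        by (simp add: pp_snoc[OF len] algebra_simps)
      finally show ?thesis .
    qed
  qed
  finally show ?thesis .
qed


lemma paths_0: "paths 0 = {[0]}"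
  by (auto simp: paths_def length_Suc_conv)

lemma mcount_Suc0: "mcount xs (Suc 0) = 1"
  using mcount_1 by simp

lemma snoc_info:
  assumes len: "length xs = Suc (Suc n)" and v: "valid xs (Suc n)" and x: "\<bar>x - xs ! Suc n\<bar> = 1"
  shows "mcount (xs @ [x]) (Suc (Suc n)) = (if x = xs ! n then Suc (mcount xs (Suc n)) else 1)"
    and "(xs @ [x]) ! Suc (Suc n) = x" "(xs @ [x]) ! Suc n = xs ! Suc n"
    and "trans_prob d xs (Suc n) x = (if x = xs ! n then recross_prob d (mcount xs (Suc n))
            else 1 - recross_prob d (mcount xs (Suc n)))"
proof -
  have e1: "(xs @ [x]) ! i = xs ! i" if "i \<le> Suc n" for i using that len by (simp add: nth_append)
  have e2: "(xs @ [x]) ! Suc (Suc n) = x" using len by (simp add: nth_append)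
  have st: "\<bar>xs ! Suc n - xs ! n\<bar> = 1" using v by (simp add: valid_def)
  have "mcount (xs @ [x]) (Suc (Suc n)) = (if (xs @ [x]) ! Suc (Suc n) = (xs @ [x]) ! (Suc n - 1)
          then Suc (mcount (xs @ [x]) (Suc n)) else 1)"
    by (rule mcount_Suc) (use e1 e2 x st in auto)
  moreover have "mcount (xs @ [x]) (Suc n) = mcount xs (Suc n)"
    by (rule mcount_cong) (use e1 in auto)
  moreover have "(xs @ [x]) ! (Suc n - 1) = xs ! n" using e1[of n] by simp
  ultimately show "mcount (xs @ [x]) (Suc (Suc n)) = (if x = xs ! n then Suc (mcount xs (Suc n)) else 1)"
    using e2 by metis
  show "(xs @ [x]) ! Suc (Suc n) = x" by (rule e2)
  show "(xs @ [x]) ! Suc n = xs ! Suc n" by (rule e1) simp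
  show "trans_prob d xs (Suc n) x = (if x = xs ! n then recross_prob d (mcount xs (Suc n))
            else 1 - recross_prob d (mcount xs (Suc n)))"
    using x by (simp add: trans_prob_def)
qed

lemma inner_Top:
  assumes len: "length xs = Suc (Suc n)" and v: "valid xs (Suc n)"
  shows "trans_prob d xs (Suc n) (xs ! Suc n - 1) *
           F ((xs @ [xs ! Suc n - 1]) ! Suc (Suc n)) ((xs @ [xs ! Suc n - 1]) ! Suc (Suc n) - (xs @ [xs ! Suc n - 1]) ! Suc n)
             (mcount (xs @ [xs ! Suc n - 1]) (Suc (Suc n)))
       + trans_prob d xs (Suc n) (xs ! Suc n + 1) *
           F ((xs @ [xs ! Suc n + 1]) ! Suc (Suc n)) ((xs @ [xs ! Suc n + 1]) ! Suc (Suc n) - (xs @ [xs ! Suc n + 1]) ! Suc n)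
             (mcount (xs @ [xs ! Suc n + 1]) (Suc (Suc n)))
       = Top d F (xs ! Suc n) (xs ! Suc n - xs ! n) (mcount xs (Suc n))"
proof -
  have st: "\<bar>xs ! Suc n - xs ! n\<bar> = 1" using v by (simp add: valid_def)
  have ha: "\<bar>(xs ! Suc n - 1) - xs ! Suc n\<bar> = 1" by simp
  have hb: "\<bar>(xs ! Suc n + 1) - xs ! Suc n\<bar> = 1" by simp
  note a = snoc_info[OF len v ha]
  note b = snoc_info[OF len v hb]
  show ?thesis
  proof (cases "xs ! n = xs ! Suc n - 1")
    case True
    then have t1: "xs ! Suc n - 1 = xs ! n" and t2: "xs ! Suc n + 1 \<noteq> xs ! n" by auto
    show ?thesis unfolding a b using t1 t2 True by (simp add: Top_def)
  next
    case False
    then have t1: "xs ! Suc n - 1 \<noteq> xs ! n" and t2: "xs ! Suc n + 1 = xs ! n" using st by auto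
    have t3: "xs ! n = xs ! Suc n + 1" using t2 by simp
    show ?thesis unfolding a b using t1 t2 t3 by (simp add: Top_def algebra_simps)
  qed
qed

lemma path_EE:
  "(\<Sum>xs\<in>paths (Suc n). path_prob d xs (Suc n) * F (xs ! Suc n) (xs ! Suc n - xs ! n) (mcount xs (Suc n)))
   = EE d n F"
proof (induction n arbitrary: F)
  case 0
  have "(\<Sum>xs\<in>paths (Suc 0). path_prob d xs (Suc 0) * F (xs ! Suc 0) (xs ! Suc 0 - xs ! 0) (mcount xs (Suc 0)))
    = (\<Sum>xs\<in>paths 0. path_prob d xs 0 * (trans_prob d xs 0 (xs ! 0 - 1) * F ((xs @ [xs ! 0 - 1]) ! Suc 0) ((xs @ [xs ! 0 - 1]) ! Suc 0 - (xs @ [xs ! 0 - 1]) ! 0) (mcount (xs @ [xs ! 0 - 1]) (Suc 0))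
        + trans_prob d xs 0 (xs ! 0 + 1) * F ((xs @ [xs ! 0 + 1]) ! Suc 0) ((xs @ [xs ! 0 + 1]) ! Suc 0 - (xs @ [xs ! 0 + 1]) ! 0) (mcount (xs @ [xs ! 0 + 1]) (Suc 0))))"
    by (rule step_sum)
  also have "\<dots> = (F 1 1 1 + F (-1) (-1) 1) / 2"
    by (simp add: paths_0 path_prob_def trans_prob_def mcount_Suc0 field_simps)
  finally show ?case by (simp add: EE_def E1_def)
next
  case (Suc n)
  have "(\<Sum>xs\<in>paths (Suc (Suc n)). path_prob d xs (Suc (Suc n)) * F (xs ! Suc (Suc n)) (xs ! Suc (Suc n) - xs ! Suc n) (mcount xs (Suc (Suc n))))
    = (\<Sum>xs\<in>paths (Suc n). path_prob d xs (Suc n) * (trans_prob d xs (Suc n) (xs ! Suc n - 1) *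
           F ((xs @ [xs ! Suc n - 1]) ! Suc (Suc n)) ((xs @ [xs ! Suc n - 1]) ! Suc (Suc n) - (xs @ [xs ! Suc n - 1]) ! Suc n)
             (mcount (xs @ [xs ! Suc n - 1]) (Suc (Suc n)))
       + trans_prob d xs (Suc n) (xs ! Suc n + 1) *
           F ((xs @ [xs ! Suc n + 1]) ! Suc (Suc n)) ((xs @ [xs ! Suc n + 1]) ! Suc (Suc n) - (xs @ [xs ! Suc n + 1]) ! Suc n)
             (mcount (xs @ [xs ! Suc n + 1]) (Suc (Suc n)))))"
    by (rule step_sum)
  also have "\<dots> = (\<Sum>xs\<in>paths (Suc n). path_prob d xs (Suc n) * Top d F (xs ! Suc n) (xs ! Suc n - xs ! n) (mcount xs (Suc n)))"
  proof (rule sum.cong[OF refl])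
    fix xs assume xs: "xs \<in> paths (Suc n)"
    show "path_prob d xs (Suc n) * (trans_prob d xs (Suc n) (xs ! Suc n - 1) *
           F ((xs @ [xs ! Suc n - 1]) ! Suc (Suc n)) ((xs @ [xs ! Suc n - 1]) ! Suc (Suc n) - (xs @ [xs ! Suc n - 1]) ! Suc n)
             (mcount (xs @ [xs ! Suc n - 1]) (Suc (Suc n)))
       + trans_prob d xs (Suc n) (xs ! Suc n + 1) *
           F ((xs @ [xs ! Suc n + 1]) ! Suc (Suc n)) ((xs @ [xs ! Suc n + 1]) ! Suc (Suc n) - (xs @ [xs ! Suc n + 1]) ! Suc n)
             (mcount (xs @ [xs ! Suc n + 1]) (Suc (Suc n))))
      = path_prob d xs (Suc n) * Top d F (xs ! Suc n) (xs ! Suc n - xs ! n) (mcount xs (Suc n))"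
    proof (cases "path_prob d xs (Suc n) = 0")
      case False
      then have v: "valid xs (Suc n)" by (rule pp_valid)
      have len: "length xs = Suc (Suc n)" using xs by (simp add: paths_def)
      show ?thesis using inner_Top[OF len v, of d F] by simp
    qed simp
  qed
  also have "\<dots> = EE d n (Top d F)" by (rule Suc.IH)
  also have "\<dots> = EE d (Suc n) F" by (simp add: Ex_step)
  finally show ?case .
qed

lemma msd_EE: "msd d (Suc n) = EE d n (\<lambda>s e m. (real_of_int s)\<^sup>2)"
  unfolding msd_def using path_EE[where F="\<lambda>s e m. (real_of_int s)\<^sup>2"] by simp

lemma onedge_set:
  assumes v: "valid xs K" and jK: "Suc j \<le> K" and H: "\<forall>m\<le>Suc j. xs ! m \<in> {0, xs ! 1}"
  shows "{xs ! j, xs ! Suc j} = {0, xs ! 1}"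
proof -
  have st: "\<bar>xs ! Suc j - xs ! j\<bar> = 1" using v jK by (simp add: valid_def)
  have a: "xs ! j \<in> {0, xs ! 1}" "xs ! Suc j \<in> {0, xs ! 1}" using H by auto
  have ne: "xs ! j \<noteq> xs ! Suc j" using st by auto
  show ?thesis using a ne by auto
qed

lemma onedge:
  assumes v: "valid xs K"
  shows "Suc j \<le> K \<Longrightarrow> (\<forall>m\<le>Suc j. xs ! m \<in> {0, xs ! 1}) \<longleftrightarrow> mcount xs (Suc j) = Suc j"
proof (induction j)
  case 0
  have "xs ! 0 = 0" using v by (simp add: valid_def)
  then have "\<forall>m\<le>Suc 0. xs ! m \<in> {0, xs ! 1}" by (auto simp: le_Suc_eq)
  then show ?case by (simp add: mcount_Suc0)
next
  case (Suc j)
  have st1: "\<bar>xs ! Suc (Suc j) - xs ! Suc j\<bar> = 1" using v Suc.prems by (simp add: valid_def)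
  have st2: "\<bar>xs ! Suc j - xs ! (Suc j - 1)\<bar> = 1" using v Suc.prems by (simp add: valid_def)
  have mc: "mcount xs (Suc (Suc j)) = (if xs ! Suc (Suc j) = xs ! (Suc j - 1) then Suc (mcount xs (Suc j)) else 1)"
    by (rule mcount_Suc) (use st1 st2 in auto)
  have split: "(\<forall>m\<le>Suc (Suc j). xs ! m \<in> {0, xs ! 1}) \<longleftrightarrow>
      (\<forall>m\<le>Suc j. xs ! m \<in> {0, xs ! 1}) \<and> xs ! Suc (Suc j) \<in> {0, xs ! 1}"
    by (auto simp: le_Suc_eq)
  have IH: "(\<forall>m\<le>Suc j. xs ! m \<in> {0, xs ! 1}) \<longleftrightarrow> mcount xs (Suc j) = Suc j"
    using Suc.IH Suc.prems by simp
  show ?case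
  proof (cases "\<forall>m\<le>Suc j. xs ! m \<in> {0, xs ! 1}")
    case True
    have set: "{xs ! j, xs ! Suc j} = {0, xs ! 1}"
      by (rule onedge_set[OF v _ True]) (use Suc.prems in simp)
    have mm: "x \<in> {0, xs ! 1} \<longleftrightarrow> x \<in> {xs ! j, xs ! Suc j}" for x unfolding set ..
    have "xs ! Suc (Suc j) \<in> {0, xs ! 1} \<longleftrightarrow> xs ! Suc (Suc j) = xs ! j"
      using mm[of "xs ! Suc (Suc j)"] st1 by auto
    then show ?thesis using True IH mc split by auto
  next
    case False
    then show ?thesis using IH mc split by auto
  qed
qed

lemma tau_EE:
  "tau_prob d (Suc j) = EE d j (\<lambda>s e m. if m = Suc j then 1 - recross_prob d m else 0)"
proof -
  define C where "C = (\<lambda>ys::int list. (\<forall>m\<le>Suc j. ys ! m \<in> {0, ys ! 1}) \<and> ys ! Suc (Suc j) \<notin> {0, ys ! 1})"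
  define G where "G = (\<lambda>ys::int list. if C ys then (1::real) else 0)"
  define Ft where "Ft = (\<lambda>(s::int) (e::int) m. if m = Suc j then 1 - recross_prob d m else 0)"
  have "tau_prob d (Suc j) = (\<Sum>ys\<in>paths (Suc (Suc j)). path_prob d ys (Suc (Suc j)) * G ys)"
    unfolding tau_prob_def G_def C_def by (intro sum.cong) auto
  also have "\<dots> = (\<Sum>xs\<in>paths (Suc j). path_prob d xs (Suc j) * (trans_prob d xs (Suc j) (xs ! Suc j - 1) * G (xs @ [xs ! Suc j - 1])
        + trans_prob d xs (Suc j) (xs ! Suc j + 1) * G (xs @ [xs ! Suc j + 1])))"
    by (rule step_sum)
  also have "\<dots> = (\<Sum>xs\<in>paths (Suc j). path_prob d xs (Suc j) * Ft (xs ! Suc j) (xs ! Suc j - xs ! j) (mcount xs (Suc j)))"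
  proof (rule sum.cong[OF refl])
    fix xs assume xs: "xs \<in> paths (Suc j)"
    show "path_prob d xs (Suc j) * (trans_prob d xs (Suc j) (xs ! Suc j - 1) * G (xs @ [xs ! Suc j - 1])
        + trans_prob d xs (Suc j) (xs ! Suc j + 1) * G (xs @ [xs ! Suc j + 1])) =
        path_prob d xs (Suc j) * Ft (xs ! Suc j) (xs ! Suc j - xs ! j) (mcount xs (Suc j))"
    proof (cases "path_prob d xs (Suc j) = 0")
      case False
      then have v: "valid xs (Suc j)" by (rule pp_valid)
      have len: "length xs = Suc (Suc j)" using xs by (simp add: paths_def)
      have e1: "(xs @ [x]) ! i = xs ! i" if "i \<le> Suc j" for i x using that len by (simp add: nth_append)
      have e2: "(xs @ [x]) ! Suc (Suc j) = x" for x using len by (simp add: nth_append)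
      have Cx: "C (xs @ [x]) \<longleftrightarrow> (\<forall>m\<le>Suc j. xs ! m \<in> {0, xs ! 1}) \<and> x \<notin> {0, xs ! 1}" for x
      proof -
        have A: "(\<forall>m\<le>Suc j. (xs @ [x]) ! m \<in> {0, (xs @ [x]) ! 1}) \<longleftrightarrow> (\<forall>m\<le>Suc j. xs ! m \<in> {0, xs ! 1})"
          using e1[of 1 x] e1[of _ x] by simp
        have B: "(xs @ [x]) ! 1 = xs ! 1" using e1[of 1 x] by simp
        show ?thesis unfolding C_def e2 B using A[unfolded B] by simp
      qed
      have st: "\<bar>xs ! Suc j - xs ! j\<bar> = 1" using v by (simp add: valid_def)
      have tpx: "trans_prob d xs (Suc j) x = (if x = xs ! j then recross_prob d (mcount xs (Suc j))
            else 1 - recross_prob d (mcount xs (Suc j)))" if "\<bar>x - xs ! Suc j\<bar> = 1" for x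
        using that by (simp add: trans_prob_def)
      note oe = onedge[OF v, of j]
      show ?thesis
      proof (cases "\<forall>m\<le>Suc j. xs ! m \<in> {0, xs ! 1}")
        case True
        have set: "{xs ! j, xs ! Suc j} = {0, xs ! 1}"
          by (rule onedge_set[OF v _ True]) simp
        have mc: "mcount xs (Suc j) = Suc j" using oe True by simp
        have mm: "x \<in> {0, xs ! 1} \<longleftrightarrow> x \<in> {xs ! j, xs ! Suc j}" for x unfolding set ..
        have Cx2: "C (xs @ [x]) \<longleftrightarrow> x \<noteq> xs ! j" if "\<bar>x - xs ! Suc j\<bar> = 1" for x
        proof -
          have "x \<noteq> xs ! Suc j" using that by auto
          then show ?thesis unfolding Cx[of x] mm[of x] using True by auto
        qed
        show ?thesis
        proof (cases "xs ! j = xs ! Suc j - 1")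
          case T2: True
          then show ?thesis using Cx2[of "xs ! Suc j - 1"] Cx2[of "xs ! Suc j + 1"]
              tpx[of "xs ! Suc j - 1"] tpx[of "xs ! Suc j + 1"] mc
            by (simp add: G_def Ft_def)
        next
          case F2: False
          then have "xs ! j = xs ! Suc j + 1" using st by auto
          then show ?thesis using Cx2[of "xs ! Suc j - 1"] Cx2[of "xs ! Suc j + 1"]
              tpx[of "xs ! Suc j - 1"] tpx[of "xs ! Suc j + 1"] mc
            by (simp add: G_def Ft_def)
        qed
      next
        case False
        have "mcount xs (Suc j) \<noteq> Suc j" using oe[OF le_refl] False by blast
        moreover have "\<not> C (xs @ [x])" for x using Cx[of x] False by blast
        ultimately show ?thesis by (simp add: G_def Ft_def)
      qed
    qed simp
  qed
  also have "\<dots> = EE d j Ft" by (rule path_EE)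
  finally show ?thesis unfolding Ft_def .
qed

lemma tau_0: "tau_prob d 0 = 0"
  by (simp add: tau_prob_def)


definition Q :: "real \<Rightarrow> nat \<Rightarrow> nat \<Rightarrow> real" where
  "Q d m j = (\<Prod>i<j. recross_prob d (m + i))"

definition AA :: "real \<Rightarrow> nat \<Rightarrow> real" where
  "AA d m = (\<Sum>j. (-1)^j * Q d m j)"

definition LL :: "real \<Rightarrow> nat \<Rightarrow> real" where
  "LL d m = (\<Sum>j. Q d m j)"

lemma Q_0[simp]: "Q d m 0 = 1" by (simp add: Q_def)

lemma Q_Suc: "Q d m (Suc j) = recross_prob d m * Q d (Suc m) j"
  unfolding Q_def prod.lessThan_Suc_shift by simp

lemma Q_Suc2: "Q d m (Suc j) = Q d m j * recross_prob d (m + j)"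
  unfolding Q_def by simp

lemma Q_nonneg: "0 \<le> Q d m j"
  unfolding Q_def by (intro prod_nonneg) (simp add: rp_nonneg)

lemma Q_le: assumes "0 < d" "d \<le> 1" shows "Q d m j \<le> (1 - d) ^ j"
proof (induction j)
  case (Suc j)
  have "Q d m (Suc j) = Q d m j * recross_prob d (m + j)" by (rule Q_Suc2)
  also have "\<dots> \<le> (1 - d) ^ j * (1 - d)"
    by (intro mult_mono Suc rp_le assms Q_nonneg) (use assms rp_nonneg in auto)
  finally show ?case by (simp add: mult.commute)
qed simp

context
  fixes d :: real
  assumes d0: "0 < d" and d1: "d \<le> 1"
begin

lemma geo_summ: "summable (\<lambda>j. (1 - d) ^ j)"
  by (rule summable_geometric) (use d0 d1 in auto)

lemma geo_sum: "(\<Sum>j. (1 - d) ^ j) = 1 / d"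
  using suminf_geometric[of "1 - d"] d0 d1 by simp

lemma Q_summ: "summable (Q d m)"
  by (rule summable_comparison_test'[OF geo_summ, of 0]) (simp add: Q_nonneg Q_le[OF d0 d1])

lemma Qa_summ: "summable (\<lambda>j. (-1)^j * Q d m j)"
  by (rule summable_comparison_test'[OF geo_summ, of 0]) (simp add: abs_mult Q_nonneg Q_le[OF d0 d1])

lemma AA_rec: "AA d m = 1 - recross_prob d m * AA d (Suc m)"
proof -
  have "AA d m = (-1)^0 * Q d m 0 + (\<Sum>j. (-1)^(Suc j) * Q d m (Suc j))"
    unfolding AA_def using suminf_split_head[OF Qa_summ, of m] by simp
  also have "(\<Sum>j. (-1)^(Suc j) * Q d m (Suc j)) = (\<Sum>j. (- recross_prob d m) * ((-1)^j * Q d (Suc m) j))"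
    by (simp add: Q_Suc mult.left_commute)
  also have "\<dots> = - recross_prob d m * AA d (Suc m)"
    unfolding AA_def by (rule suminf_mult[OF Qa_summ])
  finally show ?thesis by simp
qed

lemma LL_rec: "LL d m = 1 + recross_prob d m * LL d (Suc m)"
proof -
  have "LL d m = Q d m 0 + (\<Sum>j. Q d m (Suc j))"
    unfolding LL_def using suminf_split_head[OF Q_summ, of m] by simp
  also have "(\<Sum>j. Q d m (Suc j)) = (\<Sum>j. recross_prob d m * Q d (Suc m) j)"
    by (simp add: Q_Suc)
  also have "\<dots> = recross_prob d m * LL d (Suc m)"
    unfolding LL_def by (rule suminf_mult[OF Q_summ])
  finally show ?thesis by simp
qed

lemma LL_le: "LL d m \<le> 1 / d"
proof -
  have "LL d m \<le> (\<Sum>j. (1 - d) ^ j)"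
    unfolding LL_def by (rule suminf_le[OF _ Q_summ geo_summ]) (simp add: Q_le[OF d0 d1])
  then show ?thesis using geo_sum by simp
qed

lemma LL_nonneg: "0 \<le> LL d m"
  unfolding LL_def by (rule suminf_nonneg[OF Q_summ]) (simp add: Q_nonneg)

lemma LL_ge1: "1 \<le> LL d m"
  using LL_rec[of m] LL_nonneg[of "Suc m"] rp_nonneg[of d m] by simp

lemma AA_bound: "\<bar>AA d m\<bar> \<le> 1 / d"
proof -
  have s: "summable (\<lambda>j. \<bar>(-1)^j * Q d m j\<bar>)"
    using Q_summ[of m] by (simp add: abs_mult Q_nonneg)
  have "\<bar>AA d m\<bar> \<le> (\<Sum>j. \<bar>(-1)^j * Q d m j\<bar>)"
    unfolding AA_def by (rule summable_rabs[OF s])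
  also have "\<dots> = LL d m" by (simp add: LL_def abs_mult Q_nonneg)
  finally show ?thesis using LL_le[of m] by linarith
qed

lemma Q_lim: "Q d m \<longlonglongrightarrow> 0"
proof (rule Lim_null_comparison[of _ "\<lambda>j. (1 - d) ^ j"])
  show "\<forall>\<^sub>F j in sequentially. norm (Q d m j) \<le> (1 - d) ^ j"
    by (simp add: Q_nonneg Q_le[OF d0 d1])
  show "(\<lambda>j. (1 - d) ^ j) \<longlonglongrightarrow> 0"
    by (rule LIMSEQ_power_zero) (use d0 d1 in auto)
qed

end

lemma EE_ind:
  "EE d j (\<lambda>s e m. if m = Suc j then f m else 0) = Q d 1 j * f (Suc j)"
proof (induction j arbitrary: f)
  case 0
  then show ?case by (simp add: EE_def E1_def)
next
  case (Suc j)
  have "Top d (\<lambda>s e m. if m = Suc (Suc j) then f m else 0) =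
        (\<lambda>s e m. if m = Suc j then recross_prob d m * f (Suc m) else 0)"
    by (intro ext) (simp add: Top_def)
  then have "EE d (Suc j) (\<lambda>s e m. if m = Suc (Suc j) then f m else 0) =
     Q d 1 j * (recross_prob d (Suc j) * f (Suc (Suc j)))"
    by (simp add: Ex_step Suc.IH)
  then show ?case by (simp add: Q_Suc2)
qed

lemma tau_Q: "tau_prob d (Suc j) = Q d 1 j - Q d 1 (Suc j)"
  by (simp add: tau_EE EE_ind Q_Suc2 algebra_simps)


lemma tau_Q': "tau_prob d (Suc j) = Q d 1 j * (1 - recross_prob d (Suc j))"
  by (simp add: tau_EE EE_ind)

lemma tau_nonneg: "0 \<le> d \<Longrightarrow> 0 \<le> tau_prob d k"
  by (cases k) (auto simp: tau_0 tau_Q' Q_nonneg rp_le1)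

context
  fixes d :: real
  assumes d0: "0 < d" and d1: "d \<le> 1"
begin

lemma tp_sums: "tau_prob d sums 1"
proof -
  have "(\<lambda>j. Q d 1 j - Q d 1 (Suc j)) sums (Q d 1 0 - 0)"
    by (rule telescope_sums'[OF Q_lim[OF d0 d1]])
  then have "(\<lambda>j. tau_prob d (Suc j)) sums 1" by (simp add: tau_Q)
  then show ?thesis by (simp add: sums_Suc_iff tau_0)
qed

lemma sg_sums: "(\<lambda>k. (-1)^(Suc k) * tau_prob d k) sums (2 * AA d 1 - 1)"
proof -
  define f where "f = (\<lambda>j. (-1)^j * Q d 1 j)"
  have f: "f sums AA d 1" unfolding f_def AA_def by (rule summable_sums[OF Qa_summ[OF d0 d1]])
  have "f sums (AA d 1 - 1 + f 0)" using f by (simp add: f_def)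
  then have g: "(\<lambda>j. f (Suc j)) sums (AA d 1 - 1)" by (simp only: sums_Suc_iff)
  have "(\<lambda>j. f j + f (Suc j)) sums (AA d 1 + (AA d 1 - 1))" by (rule sums_add[OF f g])
  moreover have "(\<lambda>j. f j + f (Suc j)) = (\<lambda>j. (-1)^(Suc (Suc j)) * tau_prob d (Suc j))"
    by (rule ext) (simp add: f_def tau_Q algebra_simps)
  ultimately have "(\<lambda>j. (-1)^(Suc (Suc j)) * tau_prob d (Suc j)) sums (2 * AA d 1 - 1)" by simp
  from sums_Suc_iff[of "\<lambda>k. (-1)^(Suc k) * tau_prob d k", THEN iffD1, OF this]
  show ?thesis by (simp add: tau_0)
qed

lemma odd_sums: "(\<lambda>k. if odd k then tau_prob d k else 0) sums AA d 1"
proof -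
  have "(\<lambda>k. (tau_prob d k + (-1)^(Suc k) * tau_prob d k) / 2) sums ((1 + (2 * AA d 1 - 1)) / 2)"
    by (intro sums_divide sums_add tp_sums sg_sums)
  moreover have "(\<lambda>k. (tau_prob d k + (-1)^(Suc k) * tau_prob d k) / 2) = (\<lambda>k. if odd k then tau_prob d k else 0)"
    by (rule ext) auto
  ultimately show ?thesis by simp
qed

lemma even_sums: "(\<lambda>k. if even k then tau_prob d k else 0) sums (1 - AA d 1)"
proof -
  have "(\<lambda>k. (tau_prob d k - (-1)^(Suc k) * tau_prob d k) / 2) sums ((1 - (2 * AA d 1 - 1)) / 2)"
    by (intro sums_divide sums_diff tp_sums sg_sums)
  moreover have "(\<lambda>k. (tau_prob d k - (-1)^(Suc k) * tau_prob d k) / 2) = (\<lambda>k. if even k then tau_prob d k else 0)"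
    by (rule ext) auto
  moreover have "(1 - (2 * AA d 1 - 1)) / 2 = 1 - AA d 1" by simp
  ultimately show ?thesis by metis
qed

lemma tau_odd_eq: "tau_odd d = AA d 1"
  unfolding tau_odd_def using odd_sums by (simp add: sums_iff)

lemma tau_even_eq: "tau_even d = 1 - AA d 1"
  unfolding tau_even_def using even_sums by (simp add: sums_iff)

lemma partial_mean: "(\<Sum>k<Suc N. real k * tau_prob d k) = (\<Sum>j<N. Q d 1 j) - real N * Q d 1 N"
proof (induction N)
  case 0
  then show ?case by simp
next
  case (Suc N)
  have "(\<Sum>k<Suc (Suc N). real k * tau_prob d k) = (\<Sum>k<Suc N. real k * tau_prob d k) + real (Suc N) * tau_prob d (Suc N)"
    by simp
  also have "\<dots> = (\<Sum>j<Suc N. Q d 1 j) - real (Suc N) * Q d 1 (Suc N)"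
    using Suc.IH by (simp add: tau_Q algebra_simps)
  finally show ?case .
qed

lemma mean_sums: "(\<lambda>k. real k * tau_prob d k) sums LL d 1"
proof -
  have a: "(\<lambda>N. \<Sum>j<N. Q d 1 j) \<longlonglongrightarrow> LL d 1"
    unfolding LL_def by (rule summable_LIMSEQ[OF Q_summ[OF d0 d1]])
  have b: "(\<lambda>N. real N * Q d 1 N) \<longlonglongrightarrow> 0"
  proof (rule Lim_null_comparison[of _ "\<lambda>N. real N * (1 - d) ^ N"])
    show "\<forall>\<^sub>F N in sequentially. norm (real N * Q d 1 N) \<le> real N * (1 - d) ^ N"
      by (intro always_eventually allI) (simp add: Q_nonneg Q_le[OF d0 d1] mult_left_mono)
    show "(\<lambda>N. real N * (1 - d) ^ N) \<longlonglongrightarrow> 0"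
      by (rule powser_times_n_limit_0) (use d0 d1 in auto)
  qed
  have "(\<lambda>N. (\<Sum>j<N. Q d 1 j) - real N * Q d 1 N) \<longlonglongrightarrow> LL d 1 - 0"
    by (rule tendsto_diff[OF a b])
  then have "(\<lambda>N. \<Sum>k<Suc N. real k * tau_prob d k) \<longlonglongrightarrow> LL d 1"
    unfolding partial_mean by simp
  then have "(\<lambda>N. \<Sum>k<N. real k * tau_prob d k) \<longlonglongrightarrow> LL d 1"
    by (rule LIMSEQ_imp_Suc[of "\<lambda>N. \<Sum>k<N. real k * tau_prob d k"])
  then show ?thesis by (simp add: sums_def)
qed

lemma tau_mean_eq: "tau_mean d = LL d 1"
  unfolding tau_mean_def using mean_sums by (simp add: sums_iff)

lemma mean_summable: "summable (\<lambda>k. real k * tau_prob d k)"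
  using mean_sums by (simp add: sums_iff)

lemma tp1: "tau_prob d 1 = 1 - recross_prob d 1"
  using tau_Q'[of d 0] by simp

lemma tp2: "tau_prob d 2 = recross_prob d 1 * (1 - recross_prob d 2)"
  using tau_Q'[of d 1] by (simp add: numeral_2_eq_2 Q_Suc2)

lemma odd_ge: "tau_prob d 1 \<le> tau_odd d"
proof -
  have "sum (\<lambda>k. if odd k then tau_prob d k else 0) {1} \<le> (\<Sum>k. if odd k then tau_prob d k else 0)"
    by (rule sum_le_suminf) (use odd_sums tau_nonneg[of d] d0 in \<open>auto simp: sums_iff\<close>)
  then show ?thesis by (simp add: tau_odd_def)
qed

lemma even_ge: "tau_prob d 2 \<le> tau_even d"
proof -
  have "sum (\<lambda>k. if even k then tau_prob d k else 0) {2} \<le> (\<Sum>k. if even k then tau_prob d k else 0)"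
    by (rule sum_le_suminf) (use even_sums tau_nonneg[of d] d0 in \<open>auto simp: sums_iff\<close>)
  then show ?thesis by (simp add: tau_even_def)
qed

end


definition g1 :: "real \<Rightarrow> real" where "g1 d = AA d 1 / (2 * (1 - AA d 1))"
definition gg :: "real \<Rightarrow> nat \<Rightarrow> real" where "gg d m = AA d m * (1 + 2 * g1 d) - g1 d"
definition hh :: "real \<Rightarrow> nat \<Rightarrow> real" where "hh d m = gg d m - 1"
definition MM :: "real \<Rightarrow> int \<Rightarrow> int \<Rightarrow> nat \<Rightarrow> real" where
  "MM d s e m = real_of_int s + real_of_int e * hh d m"
definition phi :: "real \<Rightarrow> nat \<Rightarrow> real" where
  "phi d m = recross_prob d m * (gg d (Suc m) + gg d m - 1)^2 + (1 - recross_prob d m) * (g1 d - gg d m + 1)^2"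
definition VV :: "real \<Rightarrow> nat \<Rightarrow> real" where
  "VV d m = AA d m * (1 + g1 d - gg d m)^2 + (1 - AA d m) * (g1 d + gg d m)^2"
definition cc :: "real \<Rightarrow> real" where "cc d = VV d 1 / LL d 1"
definition psi :: "real \<Rightarrow> nat \<Rightarrow> real" where "psi d m = VV d m - cc d * LL d m"

lemma alg1: assumes "(A::real) \<noteq> 1" shows "A * (1 + 2 * (A / (2 * (1 - A)))) - A / (2 * (1 - A)) = A / (2 * (1 - A))"
proof -
  have ne: "1 - A \<noteq> 0" using assms by simp
  have "1 + 2 * (A / (2 * (1 - A))) = 1 / (1 - A)" using ne by (simp add: field_simps)
  then have "A * (1 + 2 * (A / (2 * (1 - A)))) = 2 * (A / (2 * (1 - A)))" using ne by (simp add: field_simps)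
  then show ?thesis by simp
qed
lemma half2: "(a::real) / (2 * x) + a / (2 * x) = a / x"
  by (metis add_divide_distrib mult_2 nonzero_mult_div_cancel_left divide_divide_eq_left times_divide_eq_left zero_neq_numeral)
lemma gen1: "(x::real) \<noteq> 0 \<Longrightarrow> x * (a / x)\<^sup>2 = a\<^sup>2 / x"
  by (simp add: power2_eq_square field_simps)
lemma gen2: "(x::real) \<noteq> 0 \<Longrightarrow> a + a\<^sup>2 / x = a * (x + a) / x"
  by (simp add: power2_eq_square field_simps)
lemma alg2: assumes "(A::real) \<noteq> 1" shows
  "A * (1 + A / (2 * (1 - A)) - A / (2 * (1 - A)))\<^sup>2 + (1 - A) * (A / (2 * (1 - A)) + A / (2 * (1 - A)))\<^sup>2 = A / (1 - A)"
proof -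
  have ne: "1 - A \<noteq> 0" using assms by simp
  have "A / (2 * (1 - A)) + A / (2 * (1 - A)) = A / (1 - A)" using half2 by blast
  moreover have "(1 - A) * (A / (1 - A))\<^sup>2 = A\<^sup>2 / (1 - A)" using gen1[OF ne] .
  moreover have "A + A\<^sup>2 / (1 - A) = A / (1 - A)" using gen2[OF ne] by simp
  ultimately show ?thesis by simp
qed

lemma VValg: fixes r A2 g :: real shows "(1 - r*A2) * (1 + g - ((1 - r*A2)*(1+2*g) - g))^2 + (1 - (1 - r*A2)) * (g + ((1 - r*A2)*(1+2*g) - g))^2 = r * ((A2*(1+2*g) - g) + ((1 - r*A2)*(1+2*g) - g) - 1)^2 + (1 - r) * (g - ((1 - r*A2)*(1+2*g) - g) + 1)^2 + r * (A2 * (1 + g - (A2*(1+2*g) - g))^2 + (1 - A2) * (g + (A2*(1+2*g) - g))^2)"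
  by algebra

lemma TMalg: fixes r a g S E :: real shows "r*((S - E) + (-E)*(a - 1))^2 + (1-r)*((S+E) + E*(g-1))^2 = (S + E*((1 + (1-r)*g - r*a) - 1))^2 + E^2 * (r*(a + (1 + (1-r)*g - r*a) - 1)^2 + (1-r)*(g - (1 + (1-r)*g - r*a) + 1)^2)"
  by algebra

lemma EE_add: "EE d n (\<lambda>s e m. F s e m + G s e m) = EE d n F + EE d n G"
  using Ex_lin[of d n 1 F 1 G] by simp

lemma EE_diff: "EE d n (\<lambda>s e m. F s e m - G s e m) = EE d n F - EE d n G"
  using Ex_lin[of d n 1 F "-1" G] by simp

lemma EE_cmult: "EE d n (\<lambda>s e m. a * F s e m) = a * EE d n F"
  using Ex_lin[of d n a F 0 F] by simp

lemma EE_addc: "EE d n (\<lambda>s e m. F s e m + c) = EE d n F + c"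
  using EE_add[of d n F "\<lambda>s e m. c"] Ex_const by simp

lemma EE_cs:
  assumes d: "0 < d"
  shows "(EE d n (\<lambda>s e m. \<bar>F s e m\<bar>))^2 \<le> EE d n (\<lambda>s e m. (F s e m)^2)"
proof -
  define a where "a = EE d n (\<lambda>s e m. \<bar>F s e m\<bar>)"
  have "EE d n (\<lambda>s e m. 0) \<le> EE d n (\<lambda>s e m. (\<bar>F s e m\<bar> - a)^2)"
    by (rule Ex_mono[OF d]) simp
  then have "0 \<le> EE d n (\<lambda>s e m. (\<bar>F s e m\<bar> - a)^2)" by (simp only: Ex_const)
  also have "(\<lambda>s e m. (\<bar>F s e m\<bar> - a)^2) = (\<lambda>s e m. 1 * (F s e m)^2 + (-2 * a) * \<bar>F s e m\<bar> + a^2)"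
    by (intro ext) (simp add: power2_eq_square algebra_simps)
  also have "EE d n \<dots> = EE d n (\<lambda>s e m. 1 * (F s e m)^2 + (-2 * a) * \<bar>F s e m\<bar>) + a^2"
    by (rule EE_addc)
  also have "EE d n (\<lambda>s e m. 1 * (F s e m)^2 + (-2 * a) * \<bar>F s e m\<bar>) = 1 * EE d n (\<lambda>s e m. (F s e m)^2) + (-2 * a) * a"
    unfolding a_def by (rule Ex_lin)
  finally show ?thesis by (simp add: a_def power2_eq_square)
qed

context
  fixes d :: real
  assumes d0: "0 < d" and d23: "d < 2/3"
begin

lemma d1: "d \<le> 1" using d23 by simp

lemma r1: "recross_prob d 1 = 2/3 - d"
  using d23 by (simp add: recross_prob_def)

lemma even_pos: "0 < 1 - AA d 1"
proof -
  have "0 < recross_prob d 1 * (1 - recross_prob d 2)"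
    using r1 d23 rp_le[OF d0 d1, of 2] d0 by (intro mult_pos_pos) auto
  also have "\<dots> = tau_prob d 2" by (rule tp2[OF d0 d1, symmetric])
  also have "\<dots> \<le> tau_even d" by (rule even_ge[OF d0 d1])
  also have "\<dots> = 1 - AA d 1" by (rule tau_even_eq[OF d0 d1])
  finally show ?thesis .
qed

lemma AAodd_pos: "0 < AA d 1"
proof -
  have "0 < 1 - recross_prob d 1" using r1 d0 by simp
  also have "\<dots> = tau_prob d 1" by (rule tp1[OF d0 d1, symmetric])
  also have "\<dots> \<le> tau_odd d" by (rule odd_ge[OF d0 d1])
  also have "\<dots> = AA d 1" by (rule tau_odd_eq[OF d0 d1])
  finally show ?thesis .
qed

lemma gg1: "gg d 1 = g1 d"
  using even_pos unfolding gg_def g1_def by (intro alg1) simp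

lemma gg_rec: "gg d m = 1 + (1 - recross_prob d m) * g1 d - recross_prob d m * gg d (Suc m)"
  unfolding gg_def by (subst AA_rec[OF d0 d1]) (simp add: algebra_simps)

lemma TopMM: "Top d (MM d) = MM d"
proof (intro ext)
  fix s e m
  show "Top d (MM d) s e m = MM d s e m"
    unfolding Top_def MM_def hh_def gg1 gg_rec[of m]
    by (simp add: algebra_simps)
qed

lemma TopMM2: "Top d (\<lambda>s e m. (MM d s e m)^2) = (\<lambda>s e m. (MM d s e m)^2 + (real_of_int e)^2 * phi d m)"
proof (intro ext)
  fix s e m
  define r where "r = recross_prob d m"
  define a where "a = gg d (Suc m)"
  define g where "g = g1 d"
  define S where "S = real_of_int s"
  define E where "E = real_of_int e"
  have b: "gg d m = 1 + (1 - r) * g - r * a" unfolding r_def a_def g_def by (rule gg_rec)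
  have "Top d (\<lambda>s e m. (MM d s e m)^2) s e m = r*((S - E) + (-E)*(a - 1))^2 + (1-r)*((S+E) + E*(g-1))^2"
    unfolding Top_def MM_def hh_def gg1 r_def a_def g_def S_def E_def by simp
  also have "\<dots> = (S + E*((1 + (1-r)*g - r*a) - 1))^2 + E^2 * (r*(a + (1 + (1-r)*g - r*a) - 1)^2 + (1-r)*(g - (1 + (1-r)*g - r*a) + 1)^2)"
    by (rule TMalg)
  also have "\<dots> = (MM d s e m)^2 + (real_of_int e)^2 * phi d m"
    unfolding MM_def hh_def phi_def b r_def[symmetric] a_def[symmetric] g_def[symmetric] S_def E_def ..
  finally show "Top d (\<lambda>s e m. (MM d s e m)^2) s e m = (MM d s e m)^2 + (real_of_int e)^2 * phi d m" .
qed

lemma VV_rec: "VV d m = phi d m + recross_prob d m * VV d (Suc m)"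
proof -
  define r where "r = recross_prob d m"
  define A2 where "A2 = AA d (Suc m)"
  define g where "g = g1 d"
  have A: "AA d m = 1 - r * A2" unfolding r_def A2_def by (rule AA_rec[OF d0 d1])
  have G1: "gg d m = (1 - r * A2) * (1 + 2 * g) - g" unfolding gg_def A g_def ..
  have G2: "gg d (Suc m) = A2 * (1 + 2 * g) - g" unfolding gg_def A2_def g_def ..
  have "VV d m = (1 - r*A2) * (1 + g - ((1 - r*A2)*(1+2*g) - g))^2 + (1 - (1 - r*A2)) * (g + ((1 - r*A2)*(1+2*g) - g))^2"
    unfolding VV_def G1 A g_def ..
  also have "\<dots> = r * ((A2*(1+2*g) - g) + ((1 - r*A2)*(1+2*g) - g) - 1)^2 + (1 - r) * (g - ((1 - r*A2)*(1+2*g) - g) + 1)^2 + r * (A2 * (1 + g - (A2*(1+2*g) - g))^2 + (1 - A2) * (g + (A2*(1+2*g) - g))^2)"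
    by (rule VValg)
  also have "\<dots> = phi d m + recross_prob d m * VV d (Suc m)"
    unfolding phi_def VV_def G1 G2 r_def[symmetric] g_def[symmetric] A2_def[symmetric] ..
  finally show ?thesis .
qed

lemma psi_rec: "psi d m = phi d m - cc d + recross_prob d m * psi d (Suc m)"
  unfolding psi_def using VV_rec[of m] LL_rec[OF d0 d1, of m] by (simp add: algebra_simps)

lemma psi1: "psi d 1 = 0"
  using LL_ge1[OF d0 d1, of 1] unfolding psi_def cc_def by simp

lemma Top_psi: "Top d (\<lambda>s e m. psi d m) = (\<lambda>s e m. psi d m - phi d m + cc d)"
proof (intro ext)
  fix s e m
  show "Top d (\<lambda>s e m. psi d m) s e m = psi d m - phi d m + cc d"
    using psi_rec[of m] psi1 by (simp add: Top_def)
qed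

lemma VV1: "VV d 1 = AA d 1 / (1 - AA d 1)"
  using even_pos unfolding VV_def gg1 g1_def by (intro alg2) simp

lemma cc_eq: "cc d = tau_odd d / (tau_even d * tau_mean d)"
  unfolding cc_def VV1 tau_odd_eq[OF d0 d1] tau_even_eq[OF d0 d1] tau_mean_eq[OF d0 d1]
  by simp

lemma cc_pos: "0 < cc d"
  unfolding cc_def VV1 using even_pos AAodd_pos LL_ge1[OF d0 d1, of 1] by simp

end


context
  fixes d :: real
  assumes d0: "0 < d" and d23: "d < 2/3"
begin

lemma d1l: "d \<le> 1" using d23 by simp

definition G0 :: real where "G0 = (1/d) * (1 + 2 * \<bar>g1 d\<bar>) + \<bar>g1 d\<bar>"

lemma AAb: "\<bar>AA d m\<bar> \<le> 1/d" by (rule AA_bound[OF d0 d1l])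

lemma gg_bound: "\<bar>gg d m\<bar> \<le> G0"
proof -
  have "\<bar>gg d m\<bar> \<le> \<bar>AA d m\<bar> * \<bar>1 + 2 * g1 d\<bar> + \<bar>g1 d\<bar>"
    unfolding gg_def by (metis abs_mult abs_triangle_ineq4)
  also have "\<dots> \<le> (1/d) * (1 + 2 * \<bar>g1 d\<bar>) + \<bar>g1 d\<bar>"
    by (intro add_mono mult_mono AAb) (use d0 in auto)
  finally show ?thesis unfolding G0_def .
qed

lemma G0_nonneg: "0 \<le> G0"
  using gg_bound[of 0] by linarith

lemma hh_bound: "\<bar>hh d m\<bar> \<le> G0 + 1"
  using gg_bound[of m] unfolding hh_def by linarith

lemma VV_bound: "\<bar>VV d m\<bar> \<le> (1/d) * (1 + \<bar>g1 d\<bar> + G0)^2 + (1 + 1/d) * (\<bar>g1 d\<bar> + G0)^2"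
proof -
  have a: "(1 + g1 d - gg d m)^2 \<le> (1 + \<bar>g1 d\<bar> + G0)^2"
    using gg_bound[of m] by (intro abs_le_square_iff[THEN iffD1]) (auto simp: abs_le_iff)
  have b: "(g1 d + gg d m)^2 \<le> (\<bar>g1 d\<bar> + G0)^2"
    using gg_bound[of m] by (intro abs_le_square_iff[THEN iffD1]) (auto simp: abs_le_iff)
  have c: "\<bar>1 - AA d m\<bar> \<le> 1 + 1/d" using AAb[of m] by linarith
  have "\<bar>VV d m\<bar> \<le> \<bar>AA d m\<bar> * (1 + g1 d - gg d m)^2 + \<bar>1 - AA d m\<bar> * (g1 d + gg d m)^2"
    unfolding VV_def by (metis (no_types) abs_mult abs_power2 abs_triangle_ineq)
  also have "\<dots> \<le> (1/d) * (1 + \<bar>g1 d\<bar> + G0)^2 + (1 + 1/d) * (\<bar>g1 d\<bar> + G0)^2"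
    by (intro add_mono mult_mono a b c AAb) (use d0 in auto)
  finally show ?thesis .
qed

definition Bpsi :: real where
  "Bpsi = (1/d) * (1 + \<bar>g1 d\<bar> + G0)^2 + (1 + 1/d) * (\<bar>g1 d\<bar> + G0)^2 + cc d / d"

lemma psi_bound: "\<bar>psi d m\<bar> \<le> Bpsi"
proof -
  have "cc d * LL d m \<le> cc d * (1/d)"
    using cc_pos[OF d0 d23] LL_le[OF d0 d1l, of m] by (intro mult_left_mono) auto
  then have "\<bar>cc d * LL d m\<bar> \<le> cc d * (1/d)"
    using cc_pos[OF d0 d23] LL_nonneg[OF d0 d1l, of m] by (simp add: abs_mult)
  then show ?thesis using VV_bound[of m] unfolding psi_def Bpsi_def by (simp add: abs_triangle_ineq4 order_trans)
qed

lemma psi_lo: "- Bpsi \<le> psi d m" using psi_bound[of m] by linarith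
lemma psi_hi: "psi d m \<le> Bpsi" using psi_bound[of m] by linarith

definition YY :: "nat \<Rightarrow> real" where "YY n = EE d n (\<lambda>s e m. (MM d s e m)^2)"
definition PP :: "nat \<Rightarrow> real" where "PP n = EE d n (\<lambda>s e m. psi d m)"

lemma PP_bound: "\<bar>PP n\<bar> \<le> Bpsi"
proof -
  have "EE d n (\<lambda>s e m. - Bpsi) \<le> PP n" unfolding PP_def
    by (rule Ex_mono[OF d0]) (rule psi_lo)
  moreover have "PP n \<le> EE d n (\<lambda>s e m. Bpsi)" unfolding PP_def
    by (rule Ex_mono[OF d0]) (rule psi_hi)
  ultimately show ?thesis by (simp add: Ex_const)
qed

lemma YY_step: "YY (Suc n) = YY n + PP n - PP (Suc n) + cc d"
proof -
  have "YY (Suc n) = EE d n (\<lambda>s e m. (MM d s e m)^2 + (real_of_int e)^2 * phi d m)"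
    unfolding YY_def Ex_step TopMM2[OF d0 d23] ..
  also have "\<dots> = EE d n (\<lambda>s e m. ((MM d s e m)^2 + psi d m) - Top d (\<lambda>s e m. psi d m) s e m + cc d)"
  proof (rule Ex_cong[OF d0])
    fix s e m assume g: "good e m"
    then have "(real_of_int e)^2 = 1" by (auto simp: good_def)
    then show "(MM d s e m)^2 + (real_of_int e)^2 * phi d m =
      ((MM d s e m)^2 + psi d m) - Top d (\<lambda>s e m. psi d m) s e m + cc d"
      unfolding Top_psi[OF d0 d23] by simp
  qed
  also have "\<dots> = YY n + PP n - PP (Suc n) + cc d"
    unfolding EE_addc EE_diff EE_add YY_def PP_def Ex_step ..
  finally show ?thesis .
qed

lemma YY_closed: "YY n = YY 0 + PP 0 - PP n + real n * cc d"
  by (induction n) (simp_all add: YY_step algebra_simps)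

definition KK :: real where "KK = \<bar>YY 0\<bar> + \<bar>PP 0\<bar> + Bpsi"

lemma KK_bound: "\<bar>YY n - real n * cc d\<bar> \<le> KK"
  using YY_closed[of n] PP_bound[of n] unfolding KK_def by linarith

lemma KK_nonneg: "0 \<le> KK" using KK_bound[of 0] by linarith

lemma YY_nonneg: "0 \<le> YY n"
  unfolding YY_def using Ex_mono[OF d0, of "\<lambda>s e m. 0" "\<lambda>s e m. (MM d s e m)^2" n] Ex_const by simp

definition XX :: "nat \<Rightarrow> real" where "XX n = EE d n (\<lambda>s e m. \<bar>MM d s e m\<bar>)"

lemma XX_le: "XX n \<le> sqrt (YY n)"
  unfolding XX_def YY_def by (rule real_le_rsqrt[OF EE_cs[OF d0]])

definition SS :: "nat \<Rightarrow> real" where "SS n = EE d n (\<lambda>s e m. (real_of_int s)^2)"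

lemma SS_close: "\<bar>SS n - YY n\<bar> \<le> 2 * (G0 + 1) * XX n + (G0 + 1)^2"
proof -
  define H where "H = G0 + 1"
  have H0: "0 \<le> H" using G0_nonneg unfolding H_def by simp
  have pt: "\<bar>(real_of_int s)^2 - (MM d s e m)^2\<bar> \<le> 2 * H * \<bar>MM d s e m\<bar> + H^2" if g: "good e m" for s e m
  proof -
    have e2: "(real_of_int e)^2 = 1" and ea: "\<bar>real_of_int e\<bar> = 1" using g by (auto simp: good_def)
    have hb: "\<bar>hh d m\<bar> \<le> H" unfolding H_def by (rule hh_bound)
    have "(real_of_int s)^2 - (MM d s e m)^2 = (real_of_int e)^2 * (hh d m)^2 - 2 * (real_of_int e * hh d m) * MM d s e m"
      unfolding MM_def by (simp add: power2_eq_square algebra_simps)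
    also have "\<dots> = (hh d m)^2 - 2 * (real_of_int e * hh d m) * MM d s e m" using e2 by simp
    finally have eq: "(real_of_int s)^2 - (MM d s e m)^2 = (hh d m)^2 - 2 * (real_of_int e * hh d m) * MM d s e m" .
    have "\<bar>(hh d m)^2 - 2 * (real_of_int e * hh d m) * MM d s e m\<bar> \<le> (hh d m)^2 + 2 * \<bar>hh d m\<bar> * \<bar>MM d s e m\<bar>"
      using ea by (simp add: abs_mult abs_triangle_ineq4[THEN order_trans])
    also have "\<dots> \<le> H^2 + 2 * H * \<bar>MM d s e m\<bar>"
      using hb by (intro add_mono mult_right_mono abs_le_square_iff[THEN iffD1]) (auto simp: H0)
    finally show ?thesis unfolding eq by simp
  qed
  have up: "SS n \<le> YY n + (2 * H * XX n + H^2)"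
  proof -
    have "SS n \<le> EE d n (\<lambda>s e m. (MM d s e m)^2 + ((2 * H) * \<bar>MM d s e m\<bar> + H^2))"
      unfolding SS_def proof (rule Ex_mono[OF d0])
      fix s e m assume g: "good e m"
      show "(real_of_int s)^2 \<le> (MM d s e m)^2 + ((2 * H) * \<bar>MM d s e m\<bar> + H^2)"
        using pt[where s=s, OF g] unfolding abs_le_iff by linarith
    qed
    also have "\<dots> = YY n + (2 * H * XX n + H^2)"
      unfolding EE_add EE_addc EE_cmult YY_def XX_def Ex_const ..
    finally show ?thesis .
  qed
  have lo: "YY n - (2 * H * XX n + H^2) \<le> SS n"
  proof -
    have "YY n - (2 * H * XX n + H^2) = EE d n (\<lambda>s e m. (MM d s e m)^2 - ((2 * H) * \<bar>MM d s e m\<bar> + H^2))"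
      unfolding EE_diff EE_addc EE_cmult YY_def XX_def Ex_const ..
    also have "\<dots> \<le> SS n"
      unfolding SS_def proof (rule Ex_mono[OF d0])
      fix s e m assume g: "good e m"
      show "(MM d s e m)^2 - ((2 * H) * \<bar>MM d s e m\<bar> + H^2) \<le> (real_of_int s)^2"
        using pt[where s=s, OF g] unfolding abs_le_iff by linarith
    qed
    finally show ?thesis .
  qed
  show ?thesis using up lo unfolding H_def by linarith
qed

lemma SS_lim: "(\<lambda>n. SS n / real (Suc n)) \<longlonglongrightarrow> cc d"
proof -
  define H where "H = G0 + 1"
  define C where "C = cc d + KK"
  define D where "D = H^2 + KK + cc d"
  have C0: "0 < C" unfolding C_def using cc_pos[OF d0 d23] KK_nonneg by simp
  have H0: "0 \<le> H" using G0_nonneg unfolding H_def by simp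
  have bound: "\<bar>SS n / real (Suc n) - cc d\<bar> \<le> (2 * H * sqrt ((real n + 1) * C) + D) / (real n + 1)" for n
  proof -
    have Yb: "YY n \<le> (real n + 1) * C"
    proof -
      have "YY n \<le> real n * cc d + KK" using KK_bound[of n] by linarith
      also have "\<dots> \<le> (real n + 1) * C" unfolding C_def using cc_pos[OF d0 d23] KK_nonneg
        by (simp add: algebra_simps)
      finally show ?thesis .
    qed
    have Xb: "XX n \<le> sqrt ((real n + 1) * C)"
      using XX_le[of n] Yb by (meson order_trans real_sqrt_le_iff)
    have "\<bar>SS n - (real n + 1) * cc d\<bar> \<le> \<bar>SS n - YY n\<bar> + \<bar>YY n - real n * cc d\<bar> + cc d"
      using cc_pos[OF d0 d23] by (simp add: algebra_simps)
    also have "\<dots> \<le> (2 * H * XX n + H^2) + KK + cc d"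
      using SS_close[of n] KK_bound[of n] unfolding H_def by linarith
    also have "\<dots> \<le> 2 * H * sqrt ((real n + 1) * C) + D"
      unfolding D_def using Xb H0 by (simp add: mult_left_mono)
    finally have *: "\<bar>SS n - (real n + 1) * cc d\<bar> \<le> 2 * H * sqrt ((real n + 1) * C) + D" .
    have "SS n / real (Suc n) - cc d = (SS n - (real n + 1) * cc d) / (real n + 1)"
      by (simp add: field_simps)
    then have "\<bar>SS n / real (Suc n) - cc d\<bar> = \<bar>SS n - (real n + 1) * cc d\<bar> / (real n + 1)"
      by simp
    also have "\<dots> \<le> (2 * H * sqrt ((real n + 1) * C) + D) / (real n + 1)"
      by (rule divide_right_mono[OF *]) simp
    finally show ?thesis .
  qed
  have lim0: "(\<lambda>n. (2 * H * sqrt ((real n + 1) * C) + D) / (real n + 1)) \<longlonglongrightarrow> 0"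
    using C0 by real_asymp
  have "(\<lambda>n. SS n / real (Suc n) - cc d) \<longlonglongrightarrow> 0"
    by (rule Lim_null_comparison[OF _ lim0]) (use bound in auto)
  then have "(\<lambda>n. (SS n / real (Suc n) - cc d) + cc d) \<longlonglongrightarrow> 0 + cc d"
    by (intro tendsto_add tendsto_const)
  then show ?thesis by simp
qed

lemma msd_lim: "(\<lambda>n. msd d n / real n) \<longlonglongrightarrow> cc d"
proof -
  have "(\<lambda>n. msd d (Suc n) / real (Suc n)) \<longlonglongrightarrow> cc d"
    using SS_lim unfolding SS_def msd_EE .
  then show ?thesis by (rule LIMSEQ_imp_Suc[of "\<lambda>n. msd d n / real n"])
qed

lemma diff_eq: "diffusion_const d = cc d"
  unfolding diffusion_const_def using msd_lim by (rule limI)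

end


lemma lnser_sums:
  fixes y :: real assumes "0 \<le> y" "y < 1"
  shows "(\<lambda>j. y ^ Suc j / real (Suc j)) sums (- ln (1 - y))"
proof -
  have "(\<lambda>n. - ((- (- y)) ^ n) / of_nat n) sums ln (1 + - y)"
    by (rule ln_series') (use assms in auto)
  then have "(\<lambda>n. - (- (y ^ n / real n))) sums (- ln (1 - y))"
    by (intro sums_minus) simp
  then have "(\<lambda>n. y ^ n / real n) sums (- ln (1 - y) + (y ^ 0 / real 0))" by simp
  then show ?thesis by (subst sums_Suc_iff)
qed

lemma hcancel: "(a::real) = b \<Longrightarrow> a \<noteq> 0 \<Longrightarrow> y \<noteq> 0 \<Longrightarrow> (2 / a * P) * (b / y * z) = 2 / y * (z * P)"
  by (simp add: field_simps)

lemma hcancel2: "(2::real) / (3 + real j) * (z * z ^ j) = 2 / (real (Suc j) + 2) * z ^ Suc j"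
  by (simp add: algebra_simps)

context
  fixes d :: real
  assumes d0: "0 < d" and d3: "d \<le> 1/3"
begin

lemma d23': "d < 2/3" using d3 by simp
lemma d1': "d \<le> 1" using d3 by simp

lemma x23: "2/3 \<le> (2 + real j) / (3 + real j)" by (simp add: field_simps)
lemma x1: "(2 + real j) / (3 + real j) \<le> 1" by simp

lemma rp_eq: "recross_prob d (Suc j) = (2 + real j) / (3 + real j) - d"
proof -
  have e: "(1 + real (Suc j)) / (2 + real (Suc j)) = (2 + real j) / (3 + real j)"
    by (simp add: algebra_simps)
  have "0 \<le> (2 + real j) / (3 + real j) - d" using x23[of j] d3 by linarith
  then show ?thesis unfolding recross_prob_def e by (simp add: max_def)
qed

lemma rp_up: "recross_prob d (1 + j) \<le> (2 + real j) / (3 + real j) * (1 - d)"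
proof -
  define x where "x = (2 + real j) / (3 + real j)"
  have "d * x \<le> d * 1" using x1[of j] d0 unfolding x_def by (intro mult_left_mono) auto
  then show ?thesis using rp_eq[of j] unfolding x_def[symmetric] by (simp add: algebra_simps)
qed

lemma rp_lo: "(2 + real j) / (3 + real j) * (1 - 3/2 * d) \<le> recross_prob d (1 + j)"
proof -
  define x where "x = (2 + real j) / (3 + real j)"
  have "d * 1 \<le> d * (3/2 * x)" using x23[of j] d0 unfolding x_def by (intro mult_left_mono) auto
  then show ?thesis using rp_eq[of j] unfolding x_def[symmetric] by (simp add: algebra_simps)
qed

lemma q_upper: "Q d 1 j \<le> 2 / (real j + 2) * (1 - d) ^ j"
proof (induction j)
  case 0
  then show ?case by simp
next
  case (Suc j)
  have r: "recross_prob d (1 + j) \<le> (2 + real j) / (3 + real j) * (1 - d)" by (rule rp_up)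
  have "Q d 1 (Suc j) = Q d 1 j * recross_prob d (1 + j)" by (rule Q_Suc2)
  also have "\<dots> \<le> (2 / (real j + 2) * (1 - d) ^ j) * ((2 + real j) / (3 + real j) * (1 - d))"
    by (intro mult_mono Suc r Q_nonneg) (use d3 rp_nonneg in auto)
  also have "\<dots> = 2 / (3 + real j) * ((1 - d) * (1 - d) ^ j)"
    by (rule hcancel) auto
  also have "\<dots> = 2 / (real (Suc j) + 2) * (1 - d) ^ Suc j" by (rule hcancel2)
  finally show ?case .
qed

lemma q_lower: "2 / (real j + 2) * (1 - 3/2 * d) ^ j \<le> Q d 1 j"
proof (induction j)
  case 0
  then show ?case by simp
next
  case (Suc j)
  have r: "(2 + real j) / (3 + real j) * (1 - 3/2 * d) \<le> recross_prob d (1 + j)" by (rule rp_lo)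
  have "2 / (real (Suc j) + 2) * (1 - 3/2 * d) ^ Suc j = 2 / (3 + real j) * ((1 - 3/2 * d) * (1 - 3/2 * d) ^ j)"
    by (rule hcancel2[symmetric])
  also have "\<dots> = (2 / (real j + 2) * (1 - 3/2 * d) ^ j) * ((2 + real j) / (3 + real j) * (1 - 3/2 * d))"
    by (rule hcancel[symmetric]) auto
  also have "\<dots> \<le> Q d 1 j * recross_prob d (1 + j)"
    by (intro mult_mono Suc r) (use d3 rp_nonneg Q_nonneg in auto)
  also have "\<dots> = Q d 1 (Suc j)" by (rule Q_Suc2[symmetric])
  finally show ?case .
qed

lemma L_upper: "LL d 1 \<le> 3 * (- ln d)"
proof -
  have s: "(\<lambda>j. 3 * ((1 - d) ^ Suc j / real (Suc j))) sums (3 * (- ln (1 - (1 - d))))"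
    by (intro sums_mult lnser_sums) (use d0 d3 in auto)
  have "LL d 1 \<le> (\<Sum>j. 3 * ((1 - d) ^ Suc j / real (Suc j)))"
    unfolding LL_def
  proof (rule suminf_le[OF _ Q_summ[OF d0 d1'] sums_summable[OF s]])
    fix j
    have "Q d 1 j \<le> 2 / (real j + 2) * (1 - d) ^ j" by (rule q_upper)
    also have "\<dots> \<le> 2 / (real j + 1) * (1 - d) ^ j"
      by (intro mult_right_mono divide_left_mono) (use d3 in auto)
    also have "\<dots> \<le> 3 * ((1 - d) ^ Suc j / real (Suc j))"
    proof -
      have "2 \<le> 3 * (1 - d)" using d3 by simp
      then have "2 * (1 - d) ^ j \<le> 3 * (1 - d) * (1 - d) ^ j"
        by (intro mult_right_mono) (use d3 in auto)
      then have "(2 * (1 - d) ^ j) / (real j + 1) \<le> (3 * (1 - d) * (1 - d) ^ j) / (real j + 1)"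
        by (intro divide_right_mono) auto
      moreover have "2 / (real j + 1) * (1 - d) ^ j = (2 * (1 - d) ^ j) / (real j + 1)" by simp
      moreover have "3 * ((1 - d) ^ Suc j / real (Suc j)) = (3 * (1 - d) * (1 - d) ^ j) / (real j + 1)"
        by (simp add: add.commute)
      ultimately show ?thesis by simp
    qed
    finally show "Q d 1 j \<le> 3 * ((1 - d) ^ Suc j / real (Suc j))" .
  qed
  also have "\<dots> = 3 * (- ln d)" using s by (simp add: sums_iff)
  finally show ?thesis .
qed

lemma L_lower: "- ln (3/2 * d) \<le> LL d 1"
proof -
  have s: "(\<lambda>j. (1 - 3/2 * d) ^ Suc j / real (Suc j)) sums (- ln (1 - (1 - 3/2 * d)))"
    by (intro lnser_sums) (use d0 d3 in auto)
  have "(\<Sum>j. (1 - 3/2 * d) ^ Suc j / real (Suc j)) \<le> LL d 1"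
    unfolding LL_def
  proof (rule suminf_le[OF _ sums_summable[OF s] Q_summ[OF d0 d1']])
    fix j
    have y0: "0 \<le> 1 - 3/2 * d" "1 - 3/2 * d \<le> 1" using d0 d3 by auto
    have "(1 - 3/2 * d) ^ Suc j \<le> 1 * (1 - 3/2 * d) ^ j"
      unfolding power_Suc using y0 by (intro mult_right_mono) auto
    then have "(1 - 3/2 * d) ^ Suc j / real (Suc j) \<le> (1 - 3/2 * d) ^ j / real (Suc j)"
      by (intro divide_right_mono) auto
    also have "\<dots> = (1 - 3/2 * d) ^ j / (real j + 1)" by (simp add: add.commute)
    finally have "(1 - 3/2 * d) ^ Suc j / real (Suc j) \<le> (1 - 3/2 * d) ^ j / (real j + 1)" .
    also have "\<dots> = (1 / (real j + 1)) * (1 - 3/2 * d) ^ j" by simp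
    also have "\<dots> \<le> 2 / (real j + 2) * (1 - 3/2 * d) ^ j"
      using y0 by (intro mult_right_mono) (auto simp: field_simps)
    also have "\<dots> \<le> Q d 1 j" by (rule q_lower)
    finally show "(1 - 3/2 * d) ^ Suc j / real (Suc j) \<le> Q d 1 j" .
  qed
  then show ?thesis using s by (simp add: sums_iff)
qed

lemma lnd_pos: "ln 3 \<le> - ln d"
proof -
  have "ln d \<le> ln (1/3)" using d0 d3 by simp
  then show ?thesis by (simp add: ln_div)
qed

lemma L_lower2: "- ln d / 2 \<le> LL d 1"
proof -
  have "ln (3/2 * d) = ln (3/2) + ln d" using d0 by (intro ln_mult_pos) auto
  then have "- ln (3/2 * d) = - ln d - ln (3/2)" by simp
  moreover have "ln (3/2::real) \<le> ln 3 / 2"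
  proof -
    have "ln ((3/2::real)^2) \<le> ln 3" by (simp add: power2_eq_square)
    then show ?thesis by (simp add: ln_realpow)
  qed
  ultimately show ?thesis using L_lower lnd_pos by linarith
qed

lemma nu_bounds: "1 / (9 * \<bar>ln d\<bar>) \<le> diffusion_const d \<and> diffusion_const d \<le> 24 / \<bar>ln d\<bar>"
proof -
  have ab: "\<bar>ln d\<bar> = - ln d" using d0 d3 by simp
  have lpos: "0 < - ln d" using lnd_pos ln_gt_zero[of 3] by linarith
  define A where "A = AA d 1"
  define L where "L = LL d 1"
  have dc: "diffusion_const d = A / ((1 - A) * L)"
    unfolding diff_eq[OF d0 d23'] cc_eq[OF d0 d23'] A_def L_def
      tau_odd_eq[OF d0 d1'] tau_even_eq[OF d0 d1'] tau_mean_eq[OF d0 d1'] ..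
  have A0: "0 < A" unfolding A_def by (rule AAodd_pos[OF d0 d23'])
  have A1: "0 < 1 - A" unfolding A_def by (rule even_pos[OF d0 d23'])
  have Alo: "1/3 \<le> A"
  proof -
    have "1/3 \<le> tau_prob d 1" using tp1[OF d0 d1'] r1[OF d0 d23'] d0 by simp
    also have "\<dots> \<le> A" unfolding A_def using odd_ge[OF d0 d1'] tau_odd_eq[OF d0 d1'] by simp
    finally show ?thesis .
  qed
  have Blo: "1/12 \<le> 1 - A"
  proof -
    have r2: "recross_prob d 2 = 3/4 - d" using rp_eq[of 1] by (simp add: numeral_2_eq_2)
    have "1/12 \<le> (2/3 - d) * (1 - (3/4 - d))"
    proof -
      have "(1/3::real) * (1/4) \<le> (2/3 - d) * (1/4 + d)"
        by (intro mult_mono) (use d0 d3 in auto)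
      then show ?thesis by simp
    qed
    also have "\<dots> = tau_prob d 2" using tp2[OF d0 d1'] r1[OF d0 d23'] r2 by simp
    also have "\<dots> \<le> 1 - A" unfolding A_def using even_ge[OF d0 d1'] tau_even_eq[OF d0 d1'] by simp
    finally show ?thesis .
  qed
  have Lu: "L \<le> 3 * (- ln d)" unfolding L_def by (rule L_upper)
  have Ll: "- ln d / 2 \<le> L" unfolding L_def by (rule L_lower2)
  have L0: "0 < L" using Ll lpos by linarith
  have lower: "1 / (9 * (- ln d)) \<le> A / ((1 - A) * L)"
  proof -
    have "1 / (9 * (- ln d)) \<le> (1/3) / (1 * (3 * (- ln d)))" using lpos by simp
    also have "\<dots> \<le> A / ((1 - A) * L)"
      using Alo A1 Lu L0 lpos A0
      by (intro frac_le mult_mono) auto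
    finally show ?thesis .
  qed
  have upper: "A / ((1 - A) * L) \<le> 24 / (- ln d)"
  proof -
    have "A / ((1 - A) * L) \<le> 1 / ((1/12) * (- ln d / 2))"
      using Blo A1 Ll L0 lpos A0 A1
      by (intro frac_le mult_mono) auto
    also have "\<dots> = 24 / (- ln d)" by simp
    finally show ?thesis .
  qed
  show ?thesis unfolding dc ab using lower upper by simp
qed

end


lemma lim24: "((\<lambda>x::real. 24 / \<bar>ln x\<bar>) \<longlongrightarrow> 0) (at_right 0)"
  by real_asymp

theorem theorem3:
  shows "(\<forall>\<delta>::real. 0 < \<delta> \<and> \<delta> < 2/3 \<longrightarrow>
            (\<lambda>n. msd \<delta> n / real n) \<longlonglongrightarrow> diffusion_const \<delta>
          \<and> diffusion_const \<delta> > 0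
          \<and> summable (\<lambda>k. real k * tau_prob \<delta> k)
          \<and> diffusion_const \<delta> = tau_odd \<delta> / (tau_even \<delta> * tau_mean \<delta>))
       \<and> (diffusion_const \<longlongrightarrow> 0) (at_right 0)
       \<and> (\<exists>c C. 0 < c \<and> c \<le> C \<and>
           (\<forall>\<^sub>F \<delta> in at_right 0.
              c / \<bar>ln \<delta>\<bar> \<le> diffusion_const \<delta> \<and> diffusion_const \<delta> \<le> C / \<bar>ln \<delta>\<bar>))"
proof (intro conjI)
  show "\<forall>\<delta>::real. 0 < \<delta> \<and> \<delta> < 2/3 \<longrightarrow>
            (\<lambda>n. msd \<delta> n / real n) \<longlonglongrightarrow> diffusion_const \<delta>
          \<and> diffusion_const \<delta> > 0
          \<and> summable (\<lambda>k. real k * tau_prob \<delta> k)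
          \<and> diffusion_const \<delta> = tau_odd \<delta> / (tau_even \<delta> * tau_mean \<delta>)"
  proof (intro allI impI)
    fix d :: real assume "0 < d \<and> d < 2/3"
    then have d0: "0 < d" and d23: "d < 2/3" by auto
    have d1: "d \<le> 1" using d23 by simp
    show "(\<lambda>n. msd d n / real n) \<longlonglongrightarrow> diffusion_const d
          \<and> diffusion_const d > 0
          \<and> summable (\<lambda>k. real k * tau_prob d k)
          \<and> diffusion_const d = tau_odd d / (tau_even d * tau_mean d)"
      using msd_lim[OF d0 d23] cc_pos[OF d0 d23] mean_summable[OF d0 d1] cc_eq[OF d0 d23]
      unfolding diff_eq[OF d0 d23] by auto
  qed
  have ev: "\<forall>\<^sub>F d in at_right 0. 1 / (9 * \<bar>ln d\<bar>) \<le> diffusion_const d \<and> diffusion_const d \<le> 24 / \<bar>ln d\<bar>"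
  proof -
    have e0: "\<forall>\<^sub>F x in at_right 0. x \<in> {0<..<1/3::real}" by (rule eventually_at_right_real) simp
    show ?thesis using e0 by (rule eventually_mono) (rule nu_bounds; auto)
  qed
  show "(diffusion_const \<longlongrightarrow> 0) (at_right 0)"
  proof (rule tendsto_sandwich[of "\<lambda>_. 0" _ _ "\<lambda>x. 24 / \<bar>ln x\<bar>"])
    show "\<forall>\<^sub>F x in at_right 0. 0 \<le> diffusion_const x"
      using ev by (rule eventually_mono) (auto intro: order_trans[rotated])
    show "\<forall>\<^sub>F x in at_right 0. diffusion_const x \<le> 24 / \<bar>ln x\<bar>"
      using ev by (rule eventually_mono) auto
  qed (auto intro: lim24)
  show "\<exists>c C. 0 < c \<and> c \<le> C \<and>
           (\<forall>\<^sub>F \<delta> in at_right 0.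
              c / \<bar>ln \<delta>\<bar> \<le> diffusion_const \<delta> \<and> diffusion_const \<delta> \<le> C / \<bar>ln \<delta>\<bar>)"
    by (rule exI[of _ "1/9"], rule exI[of _ 24]) (use ev in auto)
qed


end
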